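(* Over $\mathrm{IKP}$, the following are equivalent: (i) $\mathrm{PlUb}$ holds and the plump operator $(-)^{\mathrm{pl}} : \mathrm{Ord} \to \mathrm{PlOrd}$ is injective; (ii) restricted excluded middle, i.e. $\forall x\ \forall y\,(x \in y \lor \neg x \in y)$.
   Context: $\mathrm{IKP}$ is intuitionistic Kripke–Platek set theory (with strong infinity). An ordinal is a transitive set of transitive sets; $\mathrm{Ord}$ is the class of ordinals. For sets $\alpha,\gamma$, $\mathrm{relpl}_\alpha(\gamma)$ denotes $\forall \delta \in \gamma\ \forall \varepsilon \in \alpha\,(\varepsilon \subseteq \delta \rightarrow \varepsilon \in \gamma)$. $\mathrm{PlOrd}$ is the class of ordinals $\alpha$ such that for all $\beta \in \alpha$ and all $\gamma \subseteq \beta$ with $\mathrm{relpl}_\alpha(\gamma)$, we have $\gamma \in \alpha$ and $\forall \delta \in \alpha\,(\beta \in \delta \rightarrow \gamma \in \delta)$. For $\alpha \in \mathrm{PlOrd}$, the plump successor is $\alpha^{\mathrm{pl}+} = \mathcal{P}(\alpha) \cap \mathrm{PlOrd} = \{\beta \subseteq \alpha : \mathrm{relpl}_\alpha(\beta)\}$. $\mathrm{PlUb}$ is the axiom $\forall \alpha \in \mathrm{PlOrd}\ \exists \beta \in \mathrm{PlOrd}\ \alpha \in \beta$; under $\mathrm{PlUb}$ every plump successor exists as a set. Assuming $\mathrm{PlUb}$, the plump operator is defined by recursion on $\alpha \in \mathrm{Ord}$ as $\alpha^{\mathrm{pl}} = \bigcup_{\beta \in \alpha} (\beta^{\mathrm{pl}})^{\mathrm{pl}+}$,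 and it takes values in $\mathrm{PlOrd}$. *)

theory Defs
  imports Main
begin

section \<open>Deep embedding of first-order intuitionistic logic in the language {\<in>, =}\<close>

text \<open>Formulas with de Bruijn indices. Terms are variables only.\<close>

datatype fm =
    Mem nat nat | Eq nat nat | Fls
  | Conj fm fm | Disj fm fm | Imp fm fm
  | All fm | Ex fm

definition Iff :: "fm \<Rightarrow> fm \<Rightarrow> fm" where
  "Iff A B = Conj (Imp A B) (Imp B A)"

definition up :: "(nat \<Rightarrow> nat) \<Rightarrow> nat \<Rightarrow> nat" where
  "up \<sigma> n = (case n of 0 \<Rightarrow> 0 | Suc m \<Rightarrow> Suc (\<sigma> m))"

fun ren :: "(nat \<Rightarrow> nat) \<Rightarrow> fm \<Rightarrow> fm" where
  "ren \<sigma> (Mem i j) = Mem (\<sigma> i) (\<sigma> j)"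
| "ren \<sigma> (Eq i j) = Eq (\<sigma> i) (\<sigma> j)"
| "ren \<sigma> Fls = Fls"
| "ren \<sigma> (Conj A B) = Conj (ren \<sigma> A) (ren \<sigma> B)"
| "ren \<sigma> (Disj A B) = Disj (ren \<sigma> A) (ren \<sigma> B)"
| "ren \<sigma> (Imp A B) = Imp (ren \<sigma> A) (ren \<sigma> B)"
| "ren \<sigma> (All A) = All (ren (up \<sigma>) A)"
| "ren \<sigma> (Ex A) = Ex (ren (up \<sigma>) A)"

definition lift :: "fm \<Rightarrow> fm" where
  "lift A = ren Suc A"

definition inst :: "fm \<Rightarrow> nat \<Rightarrow> fm" where
  "inst A x = ren (\<lambda>n. case n of 0 \<Rightarrow> x | Suc m \<Rightarrow> m) A"

fun fvs :: "fm \<Rightarrow> nat set" where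
  "fvs (Mem i j) = {i, j}"
| "fvs (Eq i j) = {i, j}"
| "fvs Fls = {}"
| "fvs (Conj A B) = fvs A \<union> fvs B"
| "fvs (Disj A B) = fvs A \<union> fvs B"
| "fvs (Imp A B) = fvs A \<union> fvs B"
| "fvs (All A) = {n. Suc n \<in> fvs A}"
| "fvs (Ex A) = {n. Suc n \<in> fvs A}"

definition closed :: "fm \<Rightarrow> bool" where
  "closed A \<longleftrightarrow> fvs A = {}"

fun alls :: "nat \<Rightarrow> fm \<Rightarrow> fm" where
  "alls 0 A = A"
| "alls (Suc n) A = All (alls n A)"

inductive deriv :: "fm set \<Rightarrow> fm \<Rightarrow> bool" (infix "\<turnstile>" 55) where
  Hyp: "A \<in> \<Gamma> \<Longrightarrow> \<Gamma> \<turnstile> A"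
| FlsE: "\<Gamma> \<turnstile> Fls \<Longrightarrow> \<Gamma> \<turnstile> A"
| ConjI: "\<Gamma> \<turnstile> A \<Longrightarrow> \<Gamma> \<turnstile> B \<Longrightarrow> \<Gamma> \<turnstile> Conj A B"
| ConjE1: "\<Gamma> \<turnstile> Conj A B \<Longrightarrow> \<Gamma> \<turnstile> A"
| ConjE2: "\<Gamma> \<turnstile> Conj A B \<Longrightarrow> \<Gamma> \<turnstile> B"
| DisjI1: "\<Gamma> \<turnstile> A \<Longrightarrow> \<Gamma> \<turnstile> Disj A B"
| DisjI2: "\<Gamma> \<turnstile> B \<Longrightarrow> \<Gamma> \<turnstile> Disj A B"
| DisjE: "\<Gamma> \<turnstile> Disj A B \<Longrightarrow> insert A \<Gamma> \<turnstile> C \<Longrightarrow> insert B \<Gamma> \<turnstile> C \<Longrightarrow> \<Gamma> \<turnstile> C"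
| ImpI: "insert A \<Gamma> \<turnstile> B \<Longrightarrow> \<Gamma> \<turnstile> Imp A B"
| ImpE: "\<Gamma> \<turnstile> Imp A B \<Longrightarrow> \<Gamma> \<turnstile> A \<Longrightarrow> \<Gamma> \<turnstile> B"
| AllI: "lift ` \<Gamma> \<turnstile> A \<Longrightarrow> \<Gamma> \<turnstile> All A"
| AllE: "\<Gamma> \<turnstile> All A \<Longrightarrow> \<Gamma> \<turnstile> inst A x"
| ExI: "\<Gamma> \<turnstile> inst A x \<Longrightarrow> \<Gamma> \<turnstile> Ex A"
| ExE: "\<Gamma> \<turnstile> Ex A \<Longrightarrow> insert A (lift ` \<Gamma>) \<turnstile> lift C \<Longrightarrow> \<Gamma> \<turnstile> C"
| EqRefl: "\<Gamma> \<turnstile> Eq x x"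
| EqSubst: "\<Gamma> \<turnstile> Eq x y \<Longrightarrow> \<Gamma> \<turnstile> inst A x \<Longrightarrow> \<Gamma> \<turnstile> inst A y"

section \<open>Named-variable surface syntax, compiled to de Bruijn form\<close>

datatype nfm =
    NMem nat nat | NEq nat nat | NFls
  | NConj nfm nfm | NDisj nfm nfm | NImp nfm nfm
  | NAll nat nfm | NEx nat nfm

fun idx :: "nat list \<Rightarrow> nat \<Rightarrow> nat" where
  "idx [] x = x"
| "idx (y # ys) x = (if x = y then 0 else Suc (idx ys x))"

fun tr :: "nat list \<Rightarrow> nfm \<Rightarrow> fm" where
  "tr bs (NMem x y) = Mem (idx bs x) (idx bs y)"
| "tr bs (NEq x y) = Eq (idx bs x) (idx bs y)"
| "tr bs NFls = Fls"
| "tr bs (NConj A B) = Conj (tr bs A) (tr bs B)"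
| "tr bs (NDisj A B) = Disj (tr bs A) (tr bs B)"
| "tr bs (NImp A B) = Imp (tr bs A) (tr bs B)"
| "tr bs (NAll x A) = All (tr (x # bs) A)"
| "tr bs (NEx x A) = Ex (tr (x # bs) A)"

definition dB :: "nfm \<Rightarrow> fm" where
  "dB A = tr [] A"

definition nIff :: "nfm \<Rightarrow> nfm \<Rightarrow> nfm" where
  "nIff A B = NConj (NImp A B) (NImp B A)"
definition nNeg :: "nfm \<Rightarrow> nfm" where
  "nNeg A = NImp A NFls"
definition nBAll :: "nat \<Rightarrow> nat \<Rightarrow> nfm \<Rightarrow> nfm" where
  "nBAll x a A = NAll x (NImp (NMem x a) A)"
definition nBEx :: "nat \<Rightarrow> nat \<Rightarrow> nfm \<Rightarrow> nfm" where
  "nBEx x a A = NEx x (NConj (NMem x a) A)"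

text \<open>Convention: in the helpers below, the first argument k is a fresh name base;
  bound names k, k+1, ... are used internally; the parameters must all be < k.\<close>

definition nSub :: "nat \<Rightarrow> nat \<Rightarrow> nat \<Rightarrow> nfm" where
  "nSub k a b = nBAll k a (NMem k b)"

definition nTrans :: "nat \<Rightarrow> nat \<Rightarrow> nfm" where
  "nTrans k x = nBAll k x (nBAll (k+1) k (NMem (k+1) x))"

definition nOrd :: "nat \<Rightarrow> nat \<Rightarrow> nfm" where
  "nOrd k x = NConj (nTrans k x) (nBAll k x (nTrans (k+1) k))"

text \<open>relpl_a(g): \<forall>\<delta>\<in>g \<forall>\<epsilon>\<in>a (\<epsilon> \<subseteq> \<delta> \<longrightarrow> \<epsilon> \<in> g)\<close>
definition nRelpl :: "nat \<Rightarrow> nat \<Rightarrow> nat \<Rightarrow> nfm" where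
  "nRelpl k a g = nBAll k g (nBAll (k+1) a (NImp (nSub (k+2) (k+1) k) (NMem (k+1) g)))"

text \<open>a \<in> PlOrd (beta = k, gamma = k+1, delta = k+2)\<close>
definition nPlOrd :: "nat \<Rightarrow> nat \<Rightarrow> nfm" where
  "nPlOrd k a = NConj (nOrd k a)
     (nBAll k a (NAll (k+1)
        (NImp (NConj (nSub (k+2) (k+1) k) (nRelpl (k+2) a (k+1)))
              (NConj (NMem (k+1) a)
                     (nBAll (k+2) a (NImp (NMem k (k+2)) (NMem (k+1) (k+2))))))))"

definition nPlUb :: "nat \<Rightarrow> nfm" where
  "nPlUb k = NAll k (NImp (nPlOrd (k+1) k)
                (NEx (k+1) (NConj (nPlOrd (k+2) (k+1)) (NMem k (k+1)))))"

text \<open>Kuratowski pairs: z = {a}, z = {a,b}, p = (a,b), (a,b) \<in> F\<close>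
definition nSing :: "nat \<Rightarrow> nat \<Rightarrow> nat \<Rightarrow> nfm" where
  "nSing k z a = NAll k (nIff (NMem k z) (NEq k a))"
definition nDoub :: "nat \<Rightarrow> nat \<Rightarrow> nat \<Rightarrow> nat \<Rightarrow> nfm" where
  "nDoub k z a b = NAll k (nIff (NMem k z) (NDisj (NEq k a) (NEq k b)))"
definition nPair :: "nat \<Rightarrow> nat \<Rightarrow> nat \<Rightarrow> nat \<Rightarrow> nfm" where
  "nPair k p a b = NAll k (nIff (NMem k p) (NDisj (nSing (k+1) k a) (nDoub (k+1) k a b)))"
definition nInPair :: "nat \<Rightarrow> nat \<Rightarrow> nat \<Rightarrow> nat \<Rightarrow> nfm" where
  "nInPair k a b F = nBEx k F (nPair (k+1) k a b)"

text \<open>y = a^pl, expressed (Sigma-recursion style) by the existence of an approximation: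
  a function F (set of pairs) on a transitive domain D with a \<in> D such that
  F(beta) = \<Union>_{gamma\<in>beta} (F(gamma))^{pl+} for all beta \<in> D, and F(a) = y.
  Here x \<in> w^{pl+} iff x \<subseteq> w \<and> relpl_w(x).
  Names: F = k, D = k+1.\<close>
definition nPL :: "nat \<Rightarrow> nat \<Rightarrow> nat \<Rightarrow> nfm" where
  "nPL k a y = NEx k (NEx (k+1)
     (NConj (nTrans (k+2) (k+1))
     (NConj (NMem a (k+1))
     (NConj (nBAll (k+2) (k+1) (NEx (k+3) (nInPair (k+4) (k+2) (k+3) k)))
     (NConj (nBAll (k+2) k (nBEx (k+3) (k+1) (NEx (k+4) (nPair (k+5) (k+2) (k+3) (k+4)))))
     (NConj (nBAll (k+2) k (nBAll (k+3) k (NAll (k+4) (NAll (k+5) (NAll (k+6)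
               (NImp (NConj (nPair (k+7) (k+2) (k+4) (k+5)) (nPair (k+7) (k+3) (k+4) (k+6)))
                     (NEq (k+5) (k+6))))))))
     (NConj (nBAll (k+2) k (NAll (k+3) (NAll (k+4)
               (NImp (nPair (k+5) (k+2) (k+3) (k+4))
                  (NAll (k+5) (nIff (NMem (k+5) (k+4))
                     (nBEx (k+6) (k+3) (NEx (k+7)
                        (NConj (nInPair (k+8) (k+6) (k+7) k)
                          (NConj (nSub (k+8) (k+5) (k+7)) (nRelpl (k+8) (k+7) (k+5))))))))))))
            (nInPair (k+2) a y k))))))))"

definition nInj :: "nat \<Rightarrow> nfm" where
  "nInj k = NAll k (NAll (k+1) (NAll (k+2)
     (NImp (NConj (nOrd (k+3) k) (NConj (nOrd (k+3) (k+1))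
              (NConj (nPL (k+3) k (k+2)) (nPL (k+3) (k+1) (k+2)))))
           (NEq k (k+1)))))"

definition nREM :: nfm where
  "nREM = NAll 0 (NAll 1 (NDisj (NMem 0 1) (nNeg (NMem 0 1))))"

section \<open>The theory IKP (with strong infinity)\<close>

definition nExt :: nfm where
  "nExt = NAll 0 (NAll 1 (NImp (NAll 2 (nIff (NMem 2 0) (NMem 2 1))) (NEq 0 1)))"
definition nPairing :: nfm where
  "nPairing = NAll 0 (NAll 1 (NEx 2 (NConj (NMem 0 2) (NMem 1 2))))"
definition nUnion :: nfm where
  "nUnion = NAll 0 (NEx 1 (nBAll 2 0 (nBAll 3 2 (NMem 3 1))))"
definition nEmpty :: nfm where
  "nEmpty = NEx 0 (NAll 1 (nNeg (NMem 1 0)))"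

text \<open>a is inductive: contains an empty set and is closed under x \<mapsto> x \<union> {x}\<close>
definition nInd :: "nat \<Rightarrow> nat \<Rightarrow> nfm" where
  "nInd k a = NConj (nBEx k a (nBAll (k+1) k NFls))
     (nBAll k a (nBEx (k+1) a
        (NConj (nBAll (k+2) (k+1) (NDisj (NMem (k+2) k) (NEq (k+2) k)))
               (NConj (nSub (k+2) k (k+1)) (NMem k (k+1))))))"

definition nStrongInf :: nfm where
  "nStrongInf = NEx 0 (NConj (nInd 1 0) (NAll 1 (NImp (nInd 2 1) (nSub 2 0 1))))"

inductive delta0 :: "fm \<Rightarrow> bool" where
  "delta0 (Mem i j)"
| "delta0 (Eq i j)"
| "delta0 Fls"
| "delta0 A \<Longrightarrow> delta0 B \<Longrightarrow> delta0 (Conj A B)"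
| "delta0 A \<Longrightarrow> delta0 B \<Longrightarrow> delta0 (Disj A B)"
| "delta0 A \<Longrightarrow> delta0 B \<Longrightarrow> delta0 (Imp A B)"
| "delta0 A \<Longrightarrow> delta0 (All (Imp (Mem 0 (Suc y)) A))"
| "delta0 A \<Longrightarrow> delta0 (Ex (Conj (Mem 0 (Suc y)) A))"

definition shift1 :: "nat \<Rightarrow> nat" where
  "shift1 n = (if n = 0 then 0 else Suc n)"
definition shift2 :: "nat \<Rightarrow> nat" where
  "shift2 n = (if n < 2 then n else Suc n)"

text \<open>Separation instance for phi(x = var 0, a = var 1, params = vars \<ge> 2):
  \<forall>a \<exists>b \<forall>x (x \<in> b \<longleftrightarrow> x \<in> a \<and> phi)\<close>
definition Sep :: "fm \<Rightarrow> fm" where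
  "Sep \<phi> = All (Ex (All (Iff (Mem 0 1) (Conj (Mem 0 2) (ren shift1 \<phi>)))))"

text \<open>Collection instance for phi(y = var 0, x = var 1, a = var 2, params = vars \<ge> 3):
  \<forall>a (\<forall>x\<in>a \<exists>y phi \<longrightarrow> \<exists>b \<forall>x\<in>a \<exists>y\<in>b phi)\<close>
definition Coll :: "fm \<Rightarrow> fm" where
  "Coll \<phi> = All (Imp (All (Imp (Mem 0 1) (Ex \<phi>)))
                      (Ex (All (Imp (Mem 0 2) (Ex (Conj (Mem 0 2) (ren shift2 \<phi>)))))))"

text \<open>Set induction instance for phi(a = var 0, params = vars \<ge> 1):
  \<forall>a (\<forall>x\<in>a phi(x) \<longrightarrow> phi(a)) \<longrightarrow> \<forall>a phi(a)\<close>
definition SetInd :: "fm \<Rightarrow> fm" where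
  "SetInd \<phi> = Imp (All (Imp (All (Imp (Mem 0 1) (ren shift1 \<phi>))) \<phi>)) (All \<phi>)"

definition IKP :: "fm set" where
  "IKP = {dB nExt, dB nPairing, dB nUnion, dB nEmpty, dB nStrongInf}
     \<union> {alls n (Sep \<phi>) | n \<phi>. delta0 \<phi> \<and> closed (alls n (Sep \<phi>))}
     \<union> {alls n (Coll \<phi>) | n \<phi>. delta0 \<phi> \<and> closed (alls n (Coll \<phi>))}
     \<union> {alls n (SetInd \<phi>) | n \<phi>. closed (alls n (SetInd \<phi>))}"

end

theory Submission
  imports Defs
begin


lemma up_0[simp]: "up s 0 = 0" and up_Suc[simp]: "up s (Suc m) = Suc (s m)"
  by (simp_all add: up_def)

lemma up_comp: "up f \<circ> up g = up (f \<circ> g)"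
  by (rule ext) (simp add: up_def split: nat.split)

lemma ren_comp: "ren f (ren g A) = ren (f \<circ> g) A"
  by (induction A arbitrary: f g) (simp_all add: up_comp)

lemma ren_cong: "(\<And>i. i \<in> fvs A \<Longrightarrow> f i = g i) \<Longrightarrow> ren f A = ren g A"
proof (induction A arbitrary: f g)
  case (All A)
  have "up f i = up g i" if "i \<in> fvs A" for i using All.prems that
    by (cases i) auto
  then have "ren (up f) A = ren (up g) A" by (rule All.IH)
  then show ?case by simp
next
  case (Ex A)
  have "up f i = up g i" if "i \<in> fvs A" for i using Ex.prems that
    by (cases i) auto
  then have "ren (up f) A = ren (up g) A" by (rule Ex.IH)
  then show ?case by simp
next
  case (Conj A B) then show ?case by (metis UnCI fvs.simps(4) ren.simps(4))
next
  case (Disj A B) then show ?case by (metis UnCI fvs.simps(5) ren.simps(5))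
next
  case (Imp A B) then show ?case by (metis UnCI fvs.simps(6) ren.simps(6))
next
  case (Mem i j) then show ?case by (metis fvs.simps(1) insertCI ren.simps(1))
next
  case (Eq i j) then show ?case by (metis fvs.simps(2) insertCI ren.simps(2))
qed simp

lemma up_id: "up (\<lambda>a. a) = (\<lambda>a. a)" by (rule ext) (simp add: up_def split: nat.split)
lemma ren_id': "ren (\<lambda>a. a) A = A"
  by (induction A) (simp_all add: up_id)
lemma ren_id: "ren id A = A" unfolding id_def by (rule ren_id')

lemma finite_Suc_pre: "finite S \<Longrightarrow> finite {n. Suc n \<in> (S::nat set)}"
proof -
  assume "finite S"
  moreover have "{n. Suc n \<in> S} \<subseteq> (\<lambda>n. n - 1) ` S"
  proof
    fix n assume "n \<in> {n. Suc n \<in> S}"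
    then show "n \<in> (\<lambda>n. n - 1) ` S" by (metis diff_Suc_1 imageI mem_Collect_eq)
  qed
  ultimately show ?thesis by (meson finite_imageI finite_subset)
qed

lemma finite_fvs[simp]: "finite (fvs A)"
  by (induction A) (simp_all add: finite_Suc_pre)

lemma mono: "\<Gamma> \<turnstile> A \<Longrightarrow> \<Gamma> \<subseteq> \<Delta> \<Longrightarrow> \<Delta> \<turnstile> A"
proof (induction arbitrary: \<Delta> rule: deriv.induct)
  case (Hyp A \<Gamma>) then show ?case by (auto intro: deriv.Hyp)
next
  case (DisjE \<Gamma> A B C) then show ?case by (meson deriv.DisjE insert_mono)
next
  case (ImpI A \<Gamma> B) then show ?case by (meson deriv.ImpI insert_mono)
next
  case (AllI \<Gamma> A) then show ?case by (meson deriv.AllI image_mono)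
next
  case (ExE \<Gamma> A C) then show ?case by (meson deriv.ExE image_mono insert_mono)
next
  case (FlsE \<Gamma> A) then show ?case by (meson deriv.FlsE)
next
  case (ConjI \<Gamma> A B) then show ?case by (meson deriv.ConjI)
next
  case (ConjE1 \<Gamma> A B) then show ?case by (meson deriv.ConjE1)
next
  case (ConjE2 \<Gamma> A B) then show ?case by (meson deriv.ConjE2)
next
  case (DisjI1 \<Gamma> A B) then show ?case by (meson deriv.DisjI1)
next
  case (DisjI2 \<Gamma> A B) then show ?case by (meson deriv.DisjI2)
next
  case (ImpE \<Gamma> A B) then show ?case by (meson deriv.ImpE)
next
  case (AllE \<Gamma> A x) then show ?case by (meson deriv.AllE)
next
  case (ExI \<Gamma> A x) then show ?case by (meson deriv.ExI)
next
  case (EqRefl \<Gamma> x) then show ?case by (meson deriv.EqRefl)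
next
  case (EqSubst \<Gamma> x y A) then show ?case by (meson deriv.EqSubst)
qed

lemma inst_ren: "ren f (inst A x) = inst (ren (up f) A) (f x)"
  unfolding inst_def ren_comp
  by (rule arg_cong[where f="\<lambda>g. ren g A"]) (rule ext, simp add: up_def split: nat.split)

lemma lift_ren: "ren (up f) (lift A) = lift (ren f A)"
  unfolding lift_def ren_comp by (rule arg_cong[where f="\<lambda>g. ren g A"]) (rule ext, simp)

lemma renaming: "\<Gamma> \<turnstile> A \<Longrightarrow> ren f ` \<Gamma> \<turnstile> ren f A"
proof (induction arbitrary: f rule: deriv.induct)
  case (Hyp A \<Gamma>) then show ?case by (auto intro: deriv.Hyp)
next
  case (FlsE \<Gamma> A f) then show ?case by (metis deriv.FlsE ren.simps(3))
next
  case (DisjE \<Gamma> A B C) then show ?case by (metis deriv.DisjE image_insert ren.simps(5))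
next
  case (ImpI A \<Gamma> B) then show ?case by (metis deriv.ImpI image_insert ren.simps(6))
next
  case (AllI \<Gamma> A f)
  have "ren (up f) ` lift ` \<Gamma> = lift ` ren f ` \<Gamma>" by (auto simp: lift_ren image_image)
  with AllI.IH[of "up f"] show ?case by (auto intro: deriv.AllI)
next
  case (AllE \<Gamma> A x f)
  then show ?case by (metis deriv.AllE inst_ren ren.simps(7))
next
  case (ExI \<Gamma> A x f)
  then show ?case by (metis deriv.ExI inst_ren ren.simps(8))
next
  case (ExE \<Gamma> A C f)
  have "ren (up f) ` insert A (lift ` \<Gamma>) = insert (ren (up f) A) (lift ` ren f ` \<Gamma>)"
    by (auto simp: lift_ren image_image)
  with ExE.IH(2)[of "up f"] ExE.IH(1)[of f] show ?case
    by (metis deriv.ExE lift_ren ren.simps(8))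
next
  case (EqSubst \<Gamma> x y A f)
  then show ?case by (metis deriv.EqSubst inst_ren ren.simps(2))
next
  case (ConjI \<Gamma> A B f) then show ?case by (metis deriv.ConjI ren.simps(4))
next
  case (ConjE1 \<Gamma> A B f) then show ?case by (metis deriv.ConjE1 ren.simps(4))
next
  case (ConjE2 \<Gamma> A B f) then show ?case by (metis deriv.ConjE2 ren.simps(4))
next
  case (DisjI1 \<Gamma> A B f) then show ?case by (metis deriv.DisjI1 ren.simps(5))
next
  case (DisjI2 \<Gamma> A B f) then show ?case by (metis deriv.DisjI2 ren.simps(5))
next
  case (ImpE \<Gamma> A B f) then show ?case by (metis deriv.ImpE ren.simps(6))
next
  case (EqRefl \<Gamma> x f) then show ?case by (metis deriv.EqRefl ren.simps(2))
qed

definition FV :: "fm set \<Rightarrow> nat set" where "FV \<Gamma> = (\<Union>A\<in>\<Gamma>. fvs A)"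
definition ok :: "fm set \<Rightarrow> bool" where "ok \<Gamma> \<longleftrightarrow> IKP \<subseteq> \<Gamma> \<and> finite (FV \<Gamma>)"

lemma ok_insert[simp]: "ok \<Gamma> \<Longrightarrow> ok (insert A \<Gamma>)"
  by (auto simp: ok_def FV_def)

lemma fresh_ex: "finite (S::nat set) \<Longrightarrow> \<exists>n. n \<notin> S"
  using infinite_UNIV_nat by (metis UNIV_I finite_subset subsetI)

lemma ren_fresh_lift: "n \<notin> fvs A \<Longrightarrow> ren (\<lambda>m. if m = n then 0 else Suc m) A = lift A"
  unfolding lift_def by (rule ren_cong) auto

lemma ren_fresh_inst: "n \<notin> fvs (All A) \<Longrightarrow> ren (\<lambda>m. if m = n then 0 else Suc m) (inst A n) = A"
proof -
  assume n: "n \<notin> fvs (All A)"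
  have "ren ((\<lambda>m. if m = n then 0 else Suc m) \<circ> (\<lambda>k. case k of 0 \<Rightarrow> n | Suc m \<Rightarrow> m)) A = ren id A"
    by (rule ren_cong) (use n in \<open>auto split: nat.split\<close>)
  then show ?thesis unfolding inst_def ren_comp ren_id .
qed

lemma allI': assumes "ok \<Gamma>" "\<And>x. \<Gamma> \<turnstile> inst A x" shows "\<Gamma> \<turnstile> All A"
proof -
  obtain n where n: "n \<notin> FV \<Gamma> \<union> fvs (All A)"
    using fresh_ex[of "FV \<Gamma> \<union> fvs (All A)"] assms(1) finite_fvs[of "All A"] unfolding ok_def
    by (metis finite_UnI)
  let ?f = "\<lambda>m. if m = n then 0 else Suc m"
  have "ren ?f ` \<Gamma> \<turnstile> ren ?f (inst A n)" using assms(2) renaming by blast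
  moreover have "ren ?f ` \<Gamma> = lift ` \<Gamma>"
    using n by (auto simp: FV_def ren_fresh_lift intro!: image_cong)
  moreover have "ren ?f (inst A n) = A" using n ren_fresh_inst by blast
  ultimately show ?thesis by (auto intro: deriv.AllI)
qed

lemma fvs_Ex_All: "fvs (Ex A) = fvs (All A)" by simp

lemma exE': assumes "\<Gamma> \<turnstile> Ex A" "ok \<Gamma>" "\<And>x. insert (inst A x) \<Gamma> \<turnstile> C" shows "\<Gamma> \<turnstile> C"
proof -
  obtain n where n: "n \<notin> FV \<Gamma> \<union> fvs (All A) \<union> fvs C"
    using fresh_ex[of "FV \<Gamma> \<union> fvs (All A) \<union> fvs C"] assms(2) finite_fvs[of "All A"] finite_fvs[of C]
    unfolding ok_def by (metis finite_UnI)
  let ?f = "\<lambda>m. if m = n then 0 else Suc m"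
  have "ren ?f ` insert (inst A n) \<Gamma> \<turnstile> ren ?f C" using assms(3) renaming by blast
  moreover have "ren ?f ` \<Gamma> = lift ` \<Gamma>"
    using n by (auto simp: FV_def ren_fresh_lift intro!: image_cong)
  moreover have "ren ?f (inst A n) = A" using n ren_fresh_inst by blast
  moreover have "ren ?f C = lift C" using n ren_fresh_lift by blast
  ultimately have "insert A (lift ` \<Gamma>) \<turnstile> lift C" by simp
  then show ?thesis using assms(1) deriv.ExE by blast
qed



lemma fvs_alls: "fvs (alls n B) = {i. i + n \<in> fvs B}"
  by (induction n arbitrary: B) (auto simp: add_Suc_right)

lemma alls_Suc': "alls (Suc n) B = alls n (All B)"
  by (induction n) auto

lemma alls_inst_gen: "(\<And>\<tau>. \<Gamma> \<turnstile> ren \<tau> (alls n B)) \<Longrightarrow> \<Gamma> \<turnstile> ren \<rho> B"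
proof (induction n arbitrary: B \<rho>)
  case 0 then show ?case by simp
next
  case (Suc n)
  have p: "\<Gamma> \<turnstile> ren \<tau> (alls n (All B))" for \<tau> using Suc.prems[of \<tau>] by (metis alls_Suc')
  have "\<Gamma> \<turnstile> ren \<rho>' (All B)" for \<rho>' using Suc.IH[of "All B" \<rho>', OF p] .
  then have "\<Gamma> \<turnstile> All (ren (up (\<lambda>m. \<rho> (Suc m))) B)" by simp
  then have "\<Gamma> \<turnstile> inst (ren (up (\<lambda>m. \<rho> (Suc m))) B) (\<rho> 0)" by (rule AllE)
  moreover have "inst (ren (up (\<lambda>m. \<rho> (Suc m))) B) (\<rho> 0) = ren \<rho> B"
    unfolding inst_def ren_comp
    by (rule arg_cong[where f="\<lambda>g. ren g B"]) (rule ext, simp add: up_def split: nat.split)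
  ultimately show ?case by simp
qed

lemma closed_ren: "fvs A = {} \<Longrightarrow> ren f A = A"
  using ren_cong[of A f "\<lambda>a. a"] ren_id' by auto

lemma alls_inst: "alls n B \<in> \<Gamma> \<Longrightarrow> fvs (alls n B) = {} \<Longrightarrow> \<Gamma> \<turnstile> ren \<rho> B"
  by (rule alls_inst_gen[of _ n]) (simp add: closed_ren Hyp)

lemma bound_ex: "\<exists>n. fvs A \<subseteq> {..<n}"
proof -
  have "fvs A \<subseteq> {..<Suc (Max (insert 0 (fvs A)))}"
  proof
    fix i assume "i \<in> fvs A"
    then have "i \<le> Max (insert 0 (fvs A))" by simp
    then show "i \<in> {..<Suc (Max (insert 0 (fvs A)))}" by simp
  qed
  then show ?thesis by blast
qed

lemma closing_n: "\<exists>n. fvs (alls n A) = {}"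
proof -
  obtain n where "fvs A \<subseteq> {..<n}" using bound_ex by blast
  then have "fvs (alls n A) = {}" by (auto simp: fvs_alls)
  then show ?thesis by blast
qed

lemma sep_ax: "IKP \<subseteq> \<Gamma> \<Longrightarrow> delta0 \<phi> \<Longrightarrow> \<Gamma> \<turnstile> Sep \<phi>"
proof -
  assume a: "IKP \<subseteq> \<Gamma>" "delta0 \<phi>"
  obtain n where n: "fvs (alls n (Sep \<phi>)) = {}" using closing_n by blast
  then have "alls n (Sep \<phi>) \<in> \<Gamma>" using a unfolding IKP_def closed_def by blast
  then have "\<Gamma> \<turnstile> ren id (Sep \<phi>)" using n alls_inst by blast
  then show ?thesis by (simp add: ren_id)
qed

lemma coll_ax: "IKP \<subseteq> \<Gamma> \<Longrightarrow> delta0 \<phi> \<Longrightarrow> \<Gamma> \<turnstile> Coll \<phi>"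
proof -
  assume a: "IKP \<subseteq> \<Gamma>" "delta0 \<phi>"
  obtain n where n: "fvs (alls n (Coll \<phi>)) = {}" using closing_n by blast
  then have "alls n (Coll \<phi>) \<in> \<Gamma>" using a unfolding IKP_def closed_def by blast
  then have "\<Gamma> \<turnstile> ren id (Coll \<phi>)" using n alls_inst by blast
  then show ?thesis by (simp add: ren_id)
qed

lemma setind_ax: "IKP \<subseteq> \<Gamma> \<Longrightarrow> \<Gamma> \<turnstile> SetInd \<phi>"
proof -
  assume a: "IKP \<subseteq> \<Gamma>"
  obtain n where n: "fvs (alls n (SetInd \<phi>)) = {}" using closing_n by blast
  then have "alls n (SetInd \<phi>) \<in> \<Gamma>" using a unfolding IKP_def closed_def by blast
  then have "\<Gamma> \<turnstile> ren id (SetInd \<phi>)" using n alls_inst by blast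
  then show ?thesis by (simp add: ren_id)
qed

lemma ax_ext: "IKP \<subseteq> \<Gamma> \<Longrightarrow> \<Gamma> \<turnstile> dB nExt" and ax_pairing: "IKP \<subseteq> \<Gamma> \<Longrightarrow> \<Gamma> \<turnstile> dB nPairing"
  and ax_union: "IKP \<subseteq> \<Gamma> \<Longrightarrow> \<Gamma> \<turnstile> dB nUnion" and ax_empty: "IKP \<subseteq> \<Gamma> \<Longrightarrow> \<Gamma> \<turnstile> dB nEmpty"
  by (auto intro!: Hyp simp: IKP_def)



definition Neg :: "fm \<Rightarrow> fm" where "Neg A = Imp A Fls"
definition sb :: "nfm \<Rightarrow> nat list \<Rightarrow> nat list \<Rightarrow> fm" where
  "sb P zs xs = ren (\<lambda>i. if i < length zs then xs ! i else i - length zs) (tr zs P)"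

definition "Sub a b = sb (nSub 100 1 2) [1,2] [a,b]"
definition "Trans x = sb (nTrans 100 1) [1] [x]"
definition "Ord x = sb (nOrd 100 1) [1] [x]"
definition "Relpl a g = sb (nRelpl 100 1 2) [1,2] [a,g]"
definition "PlOrd a = sb (nPlOrd 100 1) [1] [a]"
definition "Sing z a = sb (nSing 100 1 2) [1,2] [z,a]"
definition "Doub z a b = sb (nDoub 100 1 2 3) [1,2,3] [z,a,b]"
definition "KPair p a b = sb (nPair 100 1 2 3) [1,2,3] [p,a,b]"
definition "InPair a b F = sb (nInPair 100 1 2 3) [1,2,3] [a,b,F]"
definition "PL a y = sb (nPL 100 1 2) [1,2] [a,y]"

lemmas NDEFS = nIff_def nNeg_def nBAll_def nBEx_def nSub_def nTrans_def nOrd_def nRelpl_def nPlOrd_def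
  nPlUb_def nSing_def nDoub_def nPair_def nInPair_def nPL_def nInj_def nREM_def nExt_def nPairing_def
  nUnion_def nEmpty_def nInd_def nStrongInf_def dB_def

lemmas CDEFS = Sub_def Trans_def Ord_def Relpl_def PlOrd_def Sing_def Doub_def KPair_def InPair_def PL_def

lemmas EV = NDEFS CDEFS sb_def inst_def lift_def shift1_def shift2_def Iff_def Neg_def

lemmas hyp = Hyp
lemma hyp1: "insert A \<Gamma> \<turnstile> A" by (rule Hyp) simp
lemma wk1: "\<Gamma> \<turnstile> A \<Longrightarrow> insert B \<Gamma> \<turnstile> A" by (erule mono) auto
lemma wk2: "\<Gamma> \<turnstile> A \<Longrightarrow> insert C (insert B \<Gamma>) \<turnstile> A" by (erule mono) auto
lemma wk3: "\<Gamma> \<turnstile> A \<Longrightarrow> insert D (insert C (insert B \<Gamma>)) \<turnstile> A" by (erule mono) auto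
lemma wk4: "\<Gamma> \<turnstile> A \<Longrightarrow> insert E (insert D (insert C (insert B \<Gamma>))) \<turnstile> A" by (erule mono) auto

lemma cut: "\<Gamma> \<turnstile> A \<Longrightarrow> insert A \<Gamma> \<turnstile> B \<Longrightarrow> \<Gamma> \<turnstile> B"
  by (meson ImpE ImpI)

lemma negI: "insert A \<Gamma> \<turnstile> Fls \<Longrightarrow> \<Gamma> \<turnstile> Neg A" unfolding Neg_def by (rule ImpI)
lemma negE: "\<Gamma> \<turnstile> Neg A \<Longrightarrow> \<Gamma> \<turnstile> A \<Longrightarrow> \<Gamma> \<turnstile> C" unfolding Neg_def by (meson ImpE FlsE)

lemma iffI: "insert A \<Gamma> \<turnstile> B \<Longrightarrow> insert B \<Gamma> \<turnstile> A \<Longrightarrow> \<Gamma> \<turnstile> Iff A B"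
  unfolding Iff_def by (intro ConjI ImpI)
lemma iffD1: "\<Gamma> \<turnstile> Iff A B \<Longrightarrow> \<Gamma> \<turnstile> A \<Longrightarrow> \<Gamma> \<turnstile> B"
  unfolding Iff_def by (meson ConjE1 ImpE)
lemma iffD2: "\<Gamma> \<turnstile> Iff A B \<Longrightarrow> \<Gamma> \<turnstile> B \<Longrightarrow> \<Gamma> \<turnstile> A"
  unfolding Iff_def by (meson ConjE2 ImpE)

lemma disjE': "\<Gamma> \<turnstile> Disj A B \<Longrightarrow> insert A \<Gamma> \<turnstile> C \<Longrightarrow> insert B \<Gamma> \<turnstile> C \<Longrightarrow> \<Gamma> \<turnstile> C"
  by (rule DisjE)

lemma inst_Imp[simp]: "inst (Imp A B) x = Imp (inst A x) (inst B x)" by (simp add: inst_def)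
lemma inst_Conj[simp]: "inst (Conj A B) x = Conj (inst A x) (inst B x)" by (simp add: inst_def)
lemma inst_Disj[simp]: "inst (Disj A B) x = Disj (inst A x) (inst B x)" by (simp add: inst_def)
lemma inst_Iff[simp]: "inst (Iff A B) x = Iff (inst A x) (inst B x)" by (simp add: inst_def Iff_def)
lemma inst_Neg[simp]: "inst (Neg A) x = Neg (inst A x)" by (simp add: inst_def Neg_def)
lemma inst_Fls[simp]: "inst Fls x = Fls" by (simp add: inst_def)
lemma inst_Mem0[simp]: "inst (Mem 0 (Suc a)) x = Mem x a" by (simp add: inst_def)
lemma inst_Mem0'[simp]: "inst (Mem (Suc a) 0) x = Mem a x" by (simp add: inst_def)

lemma ballI: "ok \<Gamma> \<Longrightarrow> (\<And>z. insert (Mem z a) \<Gamma> \<turnstile> inst A z) \<Longrightarrow> \<Gamma> \<turnstile> All (Imp (Mem 0 (Suc a)) A)"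
  by (rule allI') (auto intro: ImpI)
lemma ballE: "\<Gamma> \<turnstile> All (Imp (Mem 0 (Suc a)) A) \<Longrightarrow> \<Gamma> \<turnstile> Mem z a \<Longrightarrow> \<Gamma> \<turnstile> inst A z"
  by (drule AllE[where x=z]) (auto intro: ImpE)
lemma bexI: "\<Gamma> \<turnstile> Mem z a \<Longrightarrow> \<Gamma> \<turnstile> inst A z \<Longrightarrow> \<Gamma> \<turnstile> Ex (Conj (Mem 0 (Suc a)) A)"
  by (rule ExI[where x=z]) (simp add: ConjI)
lemma bexE: "\<Gamma> \<turnstile> Ex (Conj (Mem 0 (Suc a)) A) \<Longrightarrow> ok \<Gamma> \<Longrightarrow>
   (\<And>z. insert (Mem z a) (insert (inst A z) \<Gamma>) \<turnstile> C) \<Longrightarrow> \<Gamma> \<turnstile> C"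
proof -
  assume a: "\<Gamma> \<turnstile> Ex (Conj (Mem 0 (Suc a)) A)" "ok \<Gamma>" "\<And>z. insert (Mem z a) (insert (inst A z) \<Gamma>) \<turnstile> C"
  show ?thesis
  proof (rule exE'[OF a(1,2)])
    fix z
    have h: "insert (inst (Conj (Mem 0 (Suc a)) A) z) \<Gamma> \<turnstile> Conj (Mem z a) (inst A z)" by (simp add: hyp1)
    show "insert (inst (Conj (Mem 0 (Suc a)) A) z) \<Gamma> \<turnstile> C"
      apply (rule cut[OF ConjE2[OF h]])
      apply (rule cut[OF wk1[OF ConjE1[OF h]]])
      apply (rule mono[OF a(3)[of z]]) by auto
  qed
qed

lemma eq_refl: "\<Gamma> \<turnstile> Eq x x" by (rule EqRefl)
lemma eqsubst: "\<Gamma> \<turnstile> Eq x y \<Longrightarrow> \<Gamma> \<turnstile> inst A x \<Longrightarrow> \<Gamma> \<turnstile> inst A y" by (rule EqSubst)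
lemma eq_sym: "\<Gamma> \<turnstile> Eq x y \<Longrightarrow> \<Gamma> \<turnstile> Eq y x"
  using EqSubst[of \<Gamma> x y "Eq 0 (Suc x)"] EqRefl by (simp add: inst_def)
lemma eq_trans: "\<Gamma> \<turnstile> Eq x y \<Longrightarrow> \<Gamma> \<turnstile> Eq y z \<Longrightarrow> \<Gamma> \<turnstile> Eq x z"
  using EqSubst[of \<Gamma> y z "Eq (Suc x) 0"] by (simp add: inst_def)
lemma eq_mem1: "\<Gamma> \<turnstile> Eq x y \<Longrightarrow> \<Gamma> \<turnstile> Mem x z \<Longrightarrow> \<Gamma> \<turnstile> Mem y z"
  using EqSubst[of \<Gamma> x y "Mem 0 (Suc z)"] by (simp add: inst_def)
lemma eq_mem2: "\<Gamma> \<turnstile> Eq x y \<Longrightarrow> \<Gamma> \<turnstile> Mem z x \<Longrightarrow> \<Gamma> \<turnstile> Mem z y"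
  using EqSubst[of \<Gamma> x y "Mem (Suc z) 0"] by (simp add: inst_def)

lemma Sub_eq: "Sub a b = All (Imp (Mem 0 (Suc a)) (Mem 0 (Suc b)))" by (simp add: EV)
lemma subI: "ok \<Gamma> \<Longrightarrow> (\<And>z. insert (Mem z a) \<Gamma> \<turnstile> Mem z b) \<Longrightarrow> \<Gamma> \<turnstile> Sub a b"
  unfolding Sub_eq by (rule ballI) auto
lemma subE: "\<Gamma> \<turnstile> Sub a b \<Longrightarrow> \<Gamma> \<turnstile> Mem z a \<Longrightarrow> \<Gamma> \<turnstile> Mem z b"
  unfolding Sub_eq by (drule ballE) auto

lemma Trans_eq: "Trans x = All (Imp (Mem 0 (Suc x)) (All (Imp (Mem 0 (Suc 0)) (Mem 0 (Suc (Suc x))))))"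
  by (simp add: EV)
lemma transI: "ok \<Gamma> \<Longrightarrow> (\<And>y z. insert (Mem z y) (insert (Mem y x) \<Gamma>) \<turnstile> Mem z x) \<Longrightarrow> \<Gamma> \<turnstile> Trans x"
  unfolding Trans_eq apply (rule ballI, assumption) apply (simp add: inst_def)
  apply (rule ballI) by (simp_all add: inst_def)
lemma transE: "\<Gamma> \<turnstile> Trans x \<Longrightarrow> \<Gamma> \<turnstile> Mem y x \<Longrightarrow> \<Gamma> \<turnstile> Mem z y \<Longrightarrow> \<Gamma> \<turnstile> Mem z x"
  unfolding Trans_eq apply (drule ballE, assumption) apply (simp add: inst_def)
  apply (drule ballE, assumption) by (simp add: inst_def)

lemma Ord_eq: "Ord x = Conj (Trans x) (All (Imp (Mem 0 (Suc x)) (Trans 0)))" by (simp add: EV)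
lemma inst_Trans0[simp]: "inst (Trans 0) y = Trans y" by (simp add: EV)
lemma ordI: "ok \<Gamma> \<Longrightarrow> \<Gamma> \<turnstile> Trans x \<Longrightarrow> (\<And>y. insert (Mem y x) \<Gamma> \<turnstile> Trans y) \<Longrightarrow> \<Gamma> \<turnstile> Ord x"
  unfolding Ord_eq by (intro ConjI ballI) auto
lemma ordE1: "\<Gamma> \<turnstile> Ord x \<Longrightarrow> \<Gamma> \<turnstile> Trans x"
  unfolding Ord_eq by (rule ConjE1)
lemma ordE2: "\<Gamma> \<turnstile> Ord x \<Longrightarrow> \<Gamma> \<turnstile> Mem y x \<Longrightarrow> \<Gamma> \<turnstile> Trans y"
  unfolding Ord_eq by (drule ConjE2, drule ballE) auto


lemma up_1[simp]: "up f 1 = Suc (f 0)" by (simp add: up_def)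
lemma up_numeral[simp]: "up f (numeral n) = Suc (f (pred_numeral n))" by (simp add: up_def numeral_eq_Suc)

definition iv :: "nat \<Rightarrow> nat \<Rightarrow> nat" where "iv n z = (case n of 0 \<Rightarrow> z | Suc m \<Rightarrow> m)"
lemma iv_simps[simp]: "iv 0 z = z" "iv (Suc m) z = m" by (simp_all add: iv_def)

lemma inst_ren_gen: "inst A z = ren (\<lambda>n. iv n z) A" by (simp add: inst_def iv_def)

lemma ren_Sub[simp]: "ren f (Sub x y) = Sub (f x) (f y)" by (simp add: EV)
lemma ren_Trans[simp]: "ren f (Trans x) = Trans (f x)" by (simp add: EV)
lemma ren_Ord[simp]: "ren f (Ord x) = Ord (f x)" by (simp add: EV)
lemma ren_Relpl[simp]: "ren f (Relpl x y) = Relpl (f x) (f y)" by (simp add: EV)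
lemma ren_PlOrd[simp]: "ren f (PlOrd x) = PlOrd (f x)" by (simp add: EV)
lemma ren_Sing[simp]: "ren f (Sing x y) = Sing (f x) (f y)" by (simp add: EV)
lemma ren_Doub[simp]: "ren f (Doub x y z) = Doub (f x) (f y) (f z)" by (simp add: EV)
lemma ren_KPair[simp]: "ren f (KPair x y z) = KPair (f x) (f y) (f z)" by (simp add: EV)
lemma ren_InPair[simp]: "ren f (InPair x y z) = InPair (f x) (f y) (f z)" by (simp add: EV)
lemma ren_PL[simp]: "ren f (PL x y) = PL (f x) (f y)" by (simp add: EV)
lemma ren_Neg[simp]: "ren f (Neg A) = Neg (ren f A)" by (simp add: Neg_def)
lemma ren_Iff[simp]: "ren f (Iff A B) = Iff (ren f A) (ren f B)" by (simp add: Iff_def)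

lemma Relpl_eq: "Relpl a g = All (Imp (Mem 0 (Suc g)) (All (Imp (Mem 0 (Suc (Suc a))) (Imp (Sub 0 (Suc 0)) (Mem 0 (Suc (Suc g)))))))"
  by (simp add: EV)
lemma relplI: "ok \<Gamma> \<Longrightarrow> (\<And>d e. insert (Sub e d) (insert (Mem e a) (insert (Mem d g) \<Gamma>)) \<turnstile> Mem e g) \<Longrightarrow> \<Gamma> \<turnstile> Relpl a g"
  unfolding Relpl_eq apply (rule ballI, assumption) apply (simp add: inst_ren_gen)
  apply (rule ballI) apply simp apply (simp add: inst_ren_gen) apply (rule ImpI) by simp
lemma relplE: "\<Gamma> \<turnstile> Relpl a g \<Longrightarrow> \<Gamma> \<turnstile> Mem d g \<Longrightarrow> \<Gamma> \<turnstile> Mem e a \<Longrightarrow> \<Gamma> \<turnstile> Sub e d \<Longrightarrow> \<Gamma> \<turnstile> Mem e g"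
  unfolding Relpl_eq apply (drule ballE, assumption) apply (simp add: inst_ren_gen)
  apply (drule ballE, assumption) apply (simp add: inst_ren_gen) by (erule ImpE)

lemma PlOrd_eq: "PlOrd a = Conj (Ord a) (All (Imp (Mem 0 (Suc a)) (All (Imp (Conj (Sub 0 (Suc 0)) (Relpl (Suc (Suc a)) 0))
   (Conj (Mem 0 (Suc (Suc a))) (All (Imp (Mem 0 (Suc (Suc (Suc a)))) (Imp (Mem (Suc (Suc 0)) 0) (Mem (Suc 0) 0)))))))))"
  by (simp add: EV)
lemma plordE1: "\<Gamma> \<turnstile> PlOrd a \<Longrightarrow> \<Gamma> \<turnstile> Ord a" unfolding PlOrd_eq by (rule ConjE1)
lemma plordE2: "\<Gamma> \<turnstile> PlOrd a \<Longrightarrow> \<Gamma> \<turnstile> Mem b a \<Longrightarrow> \<Gamma> \<turnstile> Sub g b \<Longrightarrow> \<Gamma> \<turnstile> Relpl a g \<Longrightarrow> \<Gamma> \<turnstile> Mem g a"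
  unfolding PlOrd_eq apply (drule ConjE2) apply (drule ballE, assumption) apply (simp add: inst_ren_gen)
  apply (drule AllE[where x=g]) apply (simp add: inst_ren_gen)
  apply (drule ImpE) apply (rule ConjI, assumption, assumption) by (erule ConjE1)
lemma plordI: "ok \<Gamma> \<Longrightarrow> \<Gamma> \<turnstile> Ord a \<Longrightarrow>
  (\<And>b g. insert (Relpl a g) (insert (Sub g b) (insert (Mem b a) \<Gamma>)) \<turnstile> Mem g a) \<Longrightarrow>
  (\<And>b g d. insert (Mem b d) (insert (Mem d a) (insert (Relpl a g) (insert (Sub g b) (insert (Mem b a) \<Gamma>)))) \<turnstile> Mem g d)
  \<Longrightarrow> \<Gamma> \<turnstile> PlOrd a"
  unfolding PlOrd_eq apply (rule ConjI, assumption) apply (rule ballI, assumption) apply (simp add: inst_ren_gen)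
  apply (rule allI') apply simp apply (simp add: inst_ren_gen) apply (rule ImpI)
  subgoal for b g
    apply (rule cut[OF ConjE1[OF hyp1]]) apply (rule cut[OF wk1[OF ConjE2[OF hyp1]]])
    apply (rule ConjI) apply (rule mono, assumption) apply blast
    apply (rule ballI) apply simp apply (simp add: inst_ren_gen) apply (rule ImpI)
    subgoal for d apply (rule mono) apply assumption by blast
    done
  done

lemma setE: "\<Gamma> \<turnstile> All (Iff (Mem 0 (Suc s)) P) \<Longrightarrow> \<Gamma> \<turnstile> Mem z s \<Longrightarrow> \<Gamma> \<turnstile> inst P z"
  by (drule AllE[where x=z]) (simp add: iffD1)
lemma setI: "\<Gamma> \<turnstile> All (Iff (Mem 0 (Suc s)) P) \<Longrightarrow> \<Gamma> \<turnstile> inst P z \<Longrightarrow> \<Gamma> \<turnstile> Mem z s"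
  by (drule AllE[where x=z]) (simp add: iffD2)
lemma setI': "ok \<Gamma> \<Longrightarrow> (\<And>z. insert (Mem z s) \<Gamma> \<turnstile> inst P z) \<Longrightarrow> (\<And>z. insert (inst P z) \<Gamma> \<turnstile> Mem z s)
  \<Longrightarrow> \<Gamma> \<turnstile> All (Iff (Mem 0 (Suc s)) P)"
  by (rule allI') (simp_all add: iffI)

lemma Sing_eq: "Sing z a = All (Iff (Mem 0 (Suc z)) (Eq 0 (Suc a)))" by (simp add: EV)
lemma Doub_eq: "Doub z a b = All (Iff (Mem 0 (Suc z)) (Disj (Eq 0 (Suc a)) (Eq 0 (Suc b))))" by (simp add: EV)
lemma KPair_eq: "KPair p a b = All (Iff (Mem 0 (Suc p)) (Disj (Sing 0 (Suc a)) (Doub 0 (Suc a) (Suc b))))" by (simp add: EV)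
lemma InPair_eq: "InPair a b F = Ex (Conj (Mem 0 (Suc F)) (KPair 0 (Suc a) (Suc b)))" by (simp add: EV)

lemma singE: "\<Gamma> \<turnstile> Sing z a \<Longrightarrow> \<Gamma> \<turnstile> Mem w z \<Longrightarrow> \<Gamma> \<turnstile> Eq w a"
  unfolding Sing_eq by (drule setE) (auto simp: inst_ren_gen)
lemma singI': "\<Gamma> \<turnstile> Sing z a \<Longrightarrow> \<Gamma> \<turnstile> Eq w a \<Longrightarrow> \<Gamma> \<turnstile> Mem w z"
  unfolding Sing_eq by (rule setI) (auto simp: inst_ren_gen)
lemma singI: "ok \<Gamma> \<Longrightarrow> (\<And>w. insert (Mem w z) \<Gamma> \<turnstile> Eq w a) \<Longrightarrow> (\<And>w. insert (Eq w a) \<Gamma> \<turnstile> Mem w z) \<Longrightarrow> \<Gamma> \<turnstile> Sing z a"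
  unfolding Sing_eq by (rule setI') (auto simp: inst_ren_gen)
lemma doubE: "\<Gamma> \<turnstile> Doub z a b \<Longrightarrow> \<Gamma> \<turnstile> Mem w z \<Longrightarrow> \<Gamma> \<turnstile> Disj (Eq w a) (Eq w b)"
  unfolding Doub_eq by (drule setE) (auto simp: inst_ren_gen)
lemma doubI': "\<Gamma> \<turnstile> Doub z a b \<Longrightarrow> \<Gamma> \<turnstile> Disj (Eq w a) (Eq w b) \<Longrightarrow> \<Gamma> \<turnstile> Mem w z"
  unfolding Doub_eq by (rule setI) (auto simp: inst_ren_gen)
lemma doubI: "ok \<Gamma> \<Longrightarrow> (\<And>w. insert (Mem w z) \<Gamma> \<turnstile> Disj (Eq w a) (Eq w b)) \<Longrightarrow> (\<And>w. insert (Disj (Eq w a) (Eq w b)) \<Gamma> \<turnstile> Mem w z) \<Longrightarrow> \<Gamma> \<turnstile> Doub z a b"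
  unfolding Doub_eq by (rule setI') (auto simp: inst_ren_gen)
lemma kpE: "\<Gamma> \<turnstile> KPair p a b \<Longrightarrow> \<Gamma> \<turnstile> Mem z p \<Longrightarrow> \<Gamma> \<turnstile> Disj (Sing z a) (Doub z a b)"
  unfolding KPair_eq by (drule setE) (auto simp: inst_ren_gen)
lemma kpI': "\<Gamma> \<turnstile> KPair p a b \<Longrightarrow> \<Gamma> \<turnstile> Disj (Sing z a) (Doub z a b) \<Longrightarrow> \<Gamma> \<turnstile> Mem z p"
  unfolding KPair_eq by (rule setI) (auto simp: inst_ren_gen)
lemma kpI: "ok \<Gamma> \<Longrightarrow> (\<And>z. insert (Mem z p) \<Gamma> \<turnstile> Disj (Sing z a) (Doub z a b)) \<Longrightarrow> (\<And>z. insert (Disj (Sing z a) (Doub z a b)) \<Gamma> \<turnstile> Mem z p) \<Longrightarrow> \<Gamma> \<turnstile> KPair p a b"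
  unfolding KPair_eq by (rule setI') (auto simp: inst_ren_gen)
lemma inpI: "\<Gamma> \<turnstile> Mem p F \<Longrightarrow> \<Gamma> \<turnstile> KPair p a b \<Longrightarrow> \<Gamma> \<turnstile> InPair a b F"
  unfolding InPair_eq by (rule bexI) (auto simp: inst_ren_gen)
lemma inpE: "\<Gamma> \<turnstile> InPair a b F \<Longrightarrow> ok \<Gamma> \<Longrightarrow> (\<And>p. insert (Mem p F) (insert (KPair p a b) \<Gamma>) \<turnstile> C) \<Longrightarrow> \<Gamma> \<turnstile> C"
  unfolding InPair_eq by (erule bexE) (auto simp: inst_ren_gen)


lemma delta0_ren: "delta0 A \<Longrightarrow> delta0 (ren f A)"
proof (induction arbitrary: f rule: delta0.induct)
  case (7 A y) then show ?case using delta0.intros(7) by simp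
next
  case (8 A y) then show ?case using delta0.intros(8) by simp
qed (auto intro: delta0.intros)

lemma shift1_eq: "shift1 = (\<lambda>n. case n of 0 \<Rightarrow> 0 | Suc k \<Rightarrow> Suc (Suc k))"
  by (rule ext) (simp add: shift1_def split: nat.split)

lemma sep_key: "inst (All (ren (up (up (\<lambda>n. case n of 0 \<Rightarrow> a | Suc m \<Rightarrow> m)))
     (Iff (Mem 0 1) (Conj (Mem 0 2) (ren shift1 (ren shift1 \<psi>)))))) s
   = All (Iff (Mem 0 (Suc s)) (Conj (Mem 0 (Suc a)) \<psi>))"
proof -
  have "ren (up (\<lambda>n. case n of 0 \<Rightarrow> s | Suc m \<Rightarrow> m)) (ren (up (up (\<lambda>n. case n of 0 \<Rightarrow> a | Suc m \<Rightarrow> m))) (ren shift1 (ren shift1 \<psi>)))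
     = ren (\<lambda>a. a) \<psi>"
    unfolding ren_comp
    by (rule arg_cong[where f="\<lambda>g. ren g \<psi>"]) (rule ext, simp add: shift1_def up_def split: nat.split)
  then show ?thesis by (simp add: inst_def ren_id' numeral_2_eq_2)
qed

lemma sepE': assumes "ok \<Gamma>" "delta0 \<psi>"
  and "\<And>s. insert (All (Iff (Mem 0 (Suc s)) (Conj (Mem 0 (Suc a)) \<psi>))) \<Gamma> \<turnstile> C"
  shows "\<Gamma> \<turnstile> C"
proof -
  have "\<Gamma> \<turnstile> Sep (ren shift1 \<psi>)" using sep_ax assms(1,2) delta0_ren ok_def by blast
  then have "\<Gamma> \<turnstile> inst (Ex (All (Iff (Mem 0 1) (Conj (Mem 0 2) (ren shift1 (ren shift1 \<psi>)))))) a"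
    unfolding Sep_def by (rule AllE)
  then have "\<Gamma> \<turnstile> Ex (All (ren (up (up (\<lambda>n. case n of 0 \<Rightarrow> a | Suc m \<Rightarrow> m)))
     (Iff (Mem 0 1) (Conj (Mem 0 2) (ren shift1 (ren shift1 \<psi>))))))"
    by (simp add: inst_def del: ren.simps(4,6))
  then show ?thesis
    apply (rule exE'[OF _ assms(1)]) unfolding sep_key by (rule assms(3))
qed

lemma setind_key: "inst (All (Imp (Mem 0 1) (ren shift1 \<phi>))) a = All (Imp (Mem 0 (Suc a)) \<phi>)"
proof -
  have "ren (up (\<lambda>n. case n of 0 \<Rightarrow> a | Suc m \<Rightarrow> m)) (ren shift1 \<phi>) = ren (\<lambda>a. a) \<phi>"
    unfolding ren_comp
    by (rule arg_cong[where f="\<lambda>g. ren g \<phi>"]) (rule ext, simp add: shift1_def up_def split: nat.split)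
  then show ?thesis by (simp add: inst_def ren_id')
qed

lemma setind: assumes "ok \<Gamma>" "\<And>a. insert (All (Imp (Mem 0 (Suc a)) \<phi>)) \<Gamma> \<turnstile> inst \<phi> a"
  shows "\<Gamma> \<turnstile> inst \<phi> x"
proof -
  have "\<Gamma> \<turnstile> SetInd \<phi>" using setind_ax assms(1) ok_def by blast
  moreover have "\<Gamma> \<turnstile> All (Imp (All (Imp (Mem 0 1) (ren shift1 \<phi>))) \<phi>)"
    apply (rule allI'[OF assms(1)]) apply (simp only: inst_Imp setind_key) by (rule ImpI) (rule assms(2))
  ultimately have "\<Gamma> \<turnstile> All \<phi>" unfolding SetInd_def by (rule ImpE)
  then show ?thesis by (rule AllE)
qed

lemma allE_All: "\<Gamma> \<turnstile> All (All A) \<Longrightarrow> \<Gamma> \<turnstile> All (ren (up (\<lambda>n. case n of 0 \<Rightarrow> a | Suc m \<Rightarrow> m)) A)"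
  by (drule AllE[where x=a]) (simp add: inst_def)

lemma extI: assumes "ok \<Gamma>" "\<And>z. insert (Mem z a) \<Gamma> \<turnstile> Mem z b" "\<And>z. insert (Mem z b) \<Gamma> \<turnstile> Mem z a"
  shows "\<Gamma> \<turnstile> Eq a b"
proof -
  have h: "\<Gamma> \<turnstile> All (All (Imp (All (Conj (Imp (Mem 0 (Suc (Suc 0))) (Mem 0 (Suc 0)))
              (Imp (Mem 0 (Suc 0)) (Mem 0 (Suc (Suc 0)))))) (Eq (Suc 0) 0)))"
    using ax_ext assms(1) ok_def by (simp add: EV)
  have "\<Gamma> \<turnstile> Imp (All (Iff (Mem 0 (Suc a)) (Mem 0 (Suc b)))) (Eq a b)"
    using AllE[OF allE_All[OF h, of a], of b] by (simp add: EV)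
  moreover have "\<Gamma> \<turnstile> All (Iff (Mem 0 (Suc a)) (Mem 0 (Suc b)))"
    by (rule setI'[OF assms(1)]) (simp_all add: assms(2,3))
  ultimately show ?thesis by (rule ImpE)
qed

lemma extI': "ok \<Gamma> \<Longrightarrow> \<Gamma> \<turnstile> Sub a b \<Longrightarrow> \<Gamma> \<turnstile> Sub b a \<Longrightarrow> \<Gamma> \<turnstile> Eq a b"
  by (rule extI) (auto intro: subE hyp1 wk1)

definition "Emp e = All (Imp (Mem 0 (Suc e)) Fls)"
lemma emptyE: "ok \<Gamma> \<Longrightarrow> (\<And>e. insert (Emp e) \<Gamma> \<turnstile> C) \<Longrightarrow> \<Gamma> \<turnstile> C"
proof -
  assume a: "ok \<Gamma>" "\<And>e. insert (Emp e) \<Gamma> \<turnstile> C"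
  have "\<Gamma> \<turnstile> Ex (All (Imp (Mem 0 (Suc 0)) Fls))" using ax_empty a(1) ok_def by (simp add: EV)
  then show ?thesis apply (rule exE'[OF _ a(1)]) using a(2) by (simp add: Emp_def inst_def)
qed
lemma empE: "\<Gamma> \<turnstile> Emp e \<Longrightarrow> \<Gamma> \<turnstile> Mem z e \<Longrightarrow> \<Gamma> \<turnstile> C"
  unfolding Emp_def by (drule ballE) (auto intro: FlsE)
lemma empI: "ok \<Gamma> \<Longrightarrow> (\<And>z. insert (Mem z e) \<Gamma> \<turnstile> Fls) \<Longrightarrow> \<Gamma> \<turnstile> Emp e"
  unfolding Emp_def by (rule ballI) auto

lemma pairingE: "ok \<Gamma> \<Longrightarrow> (\<And>w. insert (Mem a w) (insert (Mem b w) \<Gamma>) \<turnstile> C) \<Longrightarrow> \<Gamma> \<turnstile> C"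
proof -
  assume a: "ok \<Gamma>" "\<And>w. insert (Mem a w) (insert (Mem b w) \<Gamma>) \<turnstile> C"
  have h: "\<Gamma> \<turnstile> All (All (Ex (Conj (Mem (Suc (Suc 0)) 0) (Mem (Suc 0) 0))))"
    using ax_pairing a(1) ok_def by (simp add: EV)
  have "\<Gamma> \<turnstile> Ex (Conj (Mem (Suc a) 0) (Mem (Suc b) 0))" using AllE[OF allE_All[OF h, of a], of b] by (simp add: EV)
  then show ?thesis apply (rule exE'[OF _ a(1)]) apply (simp add: inst_def)
    apply (rule cut[OF ConjE1[OF hyp1]]) apply (rule cut[OF wk1[OF ConjE2[OF hyp1]]])
    apply (rule mono[OF a(2)]) by blast
qed

definition "Uni u a = All (Imp (Mem 0 (Suc a)) (All (Imp (Mem 0 (Suc 0)) (Mem 0 (Suc (Suc u))))))"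
lemma unionE: "ok \<Gamma> \<Longrightarrow> (\<And>u. insert (Uni u a) \<Gamma> \<turnstile> C) \<Longrightarrow> \<Gamma> \<turnstile> C"
proof -
  assume a: "ok \<Gamma>" "\<And>u. insert (Uni u a) \<Gamma> \<turnstile> C"
  have h: "\<Gamma> \<turnstile> All (Ex (All (Imp (Mem 0 (Suc (Suc 0))) (All (Imp (Mem 0 (Suc 0)) (Mem 0 (Suc (Suc 0))))))))"
    using ax_union a(1) ok_def by (simp add: EV)
  have "\<Gamma> \<turnstile> Ex (All (Imp (Mem 0 (Suc (Suc a))) (All (Imp (Mem 0 (Suc 0)) (Mem 0 (Suc (Suc 0)))))))" using AllE[OF h, of a] by (simp add: EV)
  then show ?thesis apply (rule exE'[OF _ a(1)]) using a(2) by (simp add: Uni_def inst_def)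
qed
lemma unE: "\<Gamma> \<turnstile> Uni u a \<Longrightarrow> \<Gamma> \<turnstile> Mem c a \<Longrightarrow> \<Gamma> \<turnstile> Mem d c \<Longrightarrow> \<Gamma> \<turnstile> Mem d u"
  unfolding Uni_def apply (drule ballE, assumption) apply (simp add: inst_def)
  apply (drule ballE, assumption) by (simp add: inst_def)

definition "REM = dB nREM"
lemma REM_eq: "REM = All (All (Disj (Mem (Suc 0) 0) (Imp (Mem (Suc 0) 0) Fls)))" by (simp add: REM_def EV)
lemma remE: "\<Gamma> \<turnstile> REM \<Longrightarrow> \<Gamma> \<turnstile> Disj (Mem x y) (Neg (Mem x y))"
  unfolding REM_eq apply (drule AllE[where x=x]) apply (simp add: inst_def) apply (drule AllE[where x=y])
  by (simp add: inst_def Neg_def)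

lemma inst_lift: "inst (lift A) x = A"
  unfolding inst_def lift_def ren_comp by (simp add: comp_def ren_id')

lemma lem: assumes "ok \<Gamma>" "\<Gamma> \<turnstile> REM" "delta0 \<phi>" shows "\<Gamma> \<turnstile> Disj \<phi> (Neg \<phi>)"
proof (rule pairingE[OF assms(1), of 0 0])
  fix w
  let ?G = "insert (Mem 0 w) (insert (Mem 0 w) \<Gamma>)"
  have ok: "ok ?G" using assms(1) by simp
  show "?G \<turnstile> Disj \<phi> (Neg \<phi>)"
  proof (rule sepE'[OF ok delta0_ren[OF assms(3), of Suc], where a=w])
    fix s
    let ?H = "insert (All (Iff (Mem 0 (Suc s)) (Conj (Mem 0 (Suc w)) (ren Suc \<phi>)))) ?G"
    have S: "?H \<turnstile> All (Iff (Mem 0 (Suc s)) (Conj (Mem 0 (Suc w)) (lift \<phi>)))" by (simp add: lift_def hyp1)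
    have r: "?H \<turnstile> Disj (Mem 0 s) (Neg (Mem 0 s))" by (rule remE) (rule mono[OF assms(2)], blast)
    show "?H \<turnstile> Disj \<phi> (Neg \<phi>)"
    proof (rule disjE'[OF r])
      have "insert (Mem 0 s) ?H \<turnstile> inst (Conj (Mem 0 (Suc w)) (lift \<phi>)) 0"
        by (rule setE[OF wk1[OF S]]) (rule hyp1)
      then show "insert (Mem 0 s) ?H \<turnstile> Disj \<phi> (Neg \<phi>)" by (simp add: inst_lift) (meson ConjE2 DisjI1)
    next
      show "insert (Neg (Mem 0 s)) ?H \<turnstile> Disj \<phi> (Neg \<phi>)"
      proof (rule DisjI2, rule negI)
        have "insert \<phi> (insert (Neg (Mem 0 s)) ?H) \<turnstile> Mem 0 s"
          apply (rule setI[OF wk2[OF S]]) apply (simp add: inst_lift)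
          apply (rule ConjI) apply (rule hyp) apply simp apply (rule hyp1) done
        then show "insert \<phi> (insert (Neg (Mem 0 s)) ?H) \<turnstile> Fls" by (meson negE hyp wk1 hyp1)
      qed
    qed
  qed
qed


lemma W: "\<Gamma> \<turnstile> A \<Longrightarrow> \<Gamma> \<subseteq> \<Delta> \<Longrightarrow> \<Delta> \<turnstile> A" by (rule mono)

lemma exactE: assumes ok: "ok \<Gamma>" and d: "delta0 \<psi>"
  and sup: "\<And>z. insert (inst \<psi> z) \<Gamma> \<turnstile> Mem z u"
  and c: "\<And>s. insert (All (Iff (Mem 0 (Suc s)) \<psi>)) \<Gamma> \<turnstile> C"
  shows "\<Gamma> \<turnstile> C"
proof (rule sepE'[OF ok d, where a=u])
  fix s
  let ?H = "insert (All (Iff (Mem 0 (Suc s)) (Conj (Mem 0 (Suc u)) \<psi>))) \<Gamma>"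
  have S: "?H \<turnstile> All (Iff (Mem 0 (Suc s)) (Conj (Mem 0 (Suc u)) \<psi>))" by (rule hyp1)
  have "?H \<turnstile> All (Iff (Mem 0 (Suc s)) \<psi>)"
  proof (rule setI')
    show "ok ?H" using ok by simp
  next
    fix z show "insert (Mem z s) ?H \<turnstile> inst \<psi> z"
      using setE[OF wk1[OF S] hyp1, of z] by (simp add: ConjE2)
  next
    fix z show "insert (inst \<psi> z) ?H \<turnstile> Mem z s"
      apply (rule setI[OF wk1[OF S]]) apply simp apply (rule ConjI)
       apply (rule W[OF sup]) apply blast by (rule hyp1)
  qed
  then show "?H \<turnstile> C" by (rule cut) (rule W[OF c], blast)
qed

lemma eqmem: "\<Gamma> \<turnstile> Eq z a \<Longrightarrow> \<Gamma> \<turnstile> Mem a u \<Longrightarrow> \<Gamma> \<turnstile> Mem z u"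
  by (rule eq_mem1[OF eq_sym])

lemma upairE: assumes ok: "ok \<Gamma>" and c: "\<And>s. insert (Doub s a b) \<Gamma> \<turnstile> C" shows "\<Gamma> \<turnstile> C"
proof (rule pairingE[OF ok, of a b])
  fix w
  let ?G = "insert (Mem a w) (insert (Mem b w) \<Gamma>)"
  show "?G \<turnstile> C"
  proof (rule exactE[where \<psi>="Disj (Eq 0 (Suc a)) (Eq 0 (Suc b))" and u=w])
    show "ok ?G" using ok by simp
    show "delta0 (Disj (Eq 0 (Suc a)) (Eq 0 (Suc b)))" by (intro delta0.intros)
  next
    fix z show "insert (inst (Disj (Eq 0 (Suc a)) (Eq 0 (Suc b))) z) ?G \<turnstile> Mem z w"
      apply (simp add: inst_def) apply (rule disjE'[OF hyp1])
      apply (rule eqmem[OF hyp1]) apply (rule hyp) apply simp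
      apply (rule eqmem[OF hyp1]) apply (rule hyp) by simp
  next
    fix s show "insert (All (Iff (Mem 0 (Suc s)) (Disj (Eq 0 (Suc a)) (Eq 0 (Suc b))))) ?G \<turnstile> C"
      unfolding Doub_eq[symmetric] by (rule W[OF c]) blast
  qed
qed

lemma singExE: assumes ok: "ok \<Gamma>" and c: "\<And>s. insert (Sing s a) \<Gamma> \<turnstile> C" shows "\<Gamma> \<turnstile> C"
proof (rule pairingE[OF ok, of a a])
  fix w
  let ?G = "insert (Mem a w) (insert (Mem a w) \<Gamma>)"
  show "?G \<turnstile> C"
  proof (rule exactE[where \<psi>="Eq 0 (Suc a)" and u=w])
    show "ok ?G" using ok by simp
    show "delta0 (Eq 0 (Suc a))" by (intro delta0.intros)
  next
    fix z show "insert (inst (Eq 0 (Suc a)) z) ?G \<turnstile> Mem z w"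
      apply (simp add: inst_def) apply (rule eqmem[OF hyp1]) apply (rule hyp) by simp
  next
    fix s show "insert (All (Iff (Mem 0 (Suc s)) (Eq 0 (Suc a)))) ?G \<turnstile> C"
      unfolding Sing_eq[symmetric] by (rule W[OF c]) blast
  qed
qed

definition "U2 s a b = All (Iff (Mem 0 (Suc s)) (Disj (Mem 0 (Suc a)) (Mem 0 (Suc b))))"
lemma union2E: assumes ok: "ok \<Gamma>" and c: "\<And>s. insert (U2 s a b) \<Gamma> \<turnstile> C" shows "\<Gamma> \<turnstile> C"
proof (rule pairingE[OF ok, of a b])
  fix w
  let ?G = "insert (Mem a w) (insert (Mem b w) \<Gamma>)"
  show "?G \<turnstile> C"
  proof (rule unionE[of _ w])
    show "ok ?G" using ok by simp
  next
    fix u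
    let ?H = "insert (Uni u w) ?G"
    show "?H \<turnstile> C"
    proof (rule exactE[where \<psi>="Disj (Mem 0 (Suc a)) (Mem 0 (Suc b))" and u=u])
      show "ok ?H" using ok by simp
      show "delta0 (Disj (Mem 0 (Suc a)) (Mem 0 (Suc b)))" by (intro delta0.intros)
    next
      fix z show "insert (inst (Disj (Mem 0 (Suc a)) (Mem 0 (Suc b))) z) ?H \<turnstile> Mem z u"
        apply (simp add: inst_def) apply (rule disjE'[OF hyp1])
        apply (rule unE[where c=a and a=w]) apply (rule hyp) apply simp apply (rule hyp) apply simp apply (rule hyp1)
        apply (rule unE[where c=b and a=w]) apply (rule hyp) apply simp apply (rule hyp) apply simp by (rule hyp1)
    next
      fix s show "insert (All (Iff (Mem 0 (Suc s)) (Disj (Mem 0 (Suc a)) (Mem 0 (Suc b))))) ?H \<turnstile> C"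
        unfolding U2_def[symmetric] by (rule W[OF c]) blast
    qed
  qed
qed

definition "Quad s a b c d = All (Iff (Mem 0 (Suc s)) (Disj (Disj (Eq 0 (Suc a)) (Eq 0 (Suc b))) (Disj (Eq 0 (Suc c)) (Eq 0 (Suc d)))))"

lemma quadE: assumes ok: "ok \<Gamma>" and c: "\<And>s. insert (Quad s a b c d) \<Gamma> \<turnstile> C" shows "\<Gamma> \<turnstile> C"
proof (rule upairE[OF ok, of a b])
  fix s1 let ?G1 = "insert (Doub s1 a b) \<Gamma>"
  have ok1: "ok ?G1" using ok by simp
  show "?G1 \<turnstile> C"
  proof (rule upairE[OF ok1, of c d])
    fix s2 let ?G2 = "insert (Doub s2 c d) ?G1"
    have ok2: "ok ?G2" using ok by simp
    show "?G2 \<turnstile> C"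
    proof (rule union2E[OF ok2, of s1 s2])
      fix u let ?G3 = "insert (U2 u s1 s2) ?G2"
      have ok3: "ok ?G3" using ok by simp
      let ?\<psi> = "Disj (Disj (Eq 0 (Suc a)) (Eq 0 (Suc b))) (Disj (Eq 0 (Suc c)) (Eq 0 (Suc d)))"
      show "?G3 \<turnstile> C"
      proof (rule exactE[OF ok3, where \<psi>="?\<psi>" and u=u])
        show "delta0 ?\<psi>" by (intro delta0.intros)
      next
        fix z let ?H = "insert (inst ?\<psi> z) ?G3"
        have U: "?H \<turnstile> U2 u s1 s2" by (rule hyp) simp
        have D1: "?H \<turnstile> Doub s1 a b" by (rule hyp) simp
        have D2: "?H \<turnstile> Doub s2 c d" by (rule hyp) simp
        have "?H \<turnstile> Disj (Mem z s1) (Mem z s2)"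
          apply (rule disjE'[of _ "Disj (Eq z a) (Eq z b)" "Disj (Eq z c) (Eq z d)"])
          apply (rule hyp) apply (simp add: inst_def)
          apply (rule DisjI1) apply (rule doubI'[OF wk1[OF D1]]) apply (rule hyp1)
          apply (rule DisjI2) apply (rule doubI'[OF wk1[OF D2]]) by (rule hyp1)
        then have "?H \<turnstile> inst (Disj (Mem 0 (Suc s1)) (Mem 0 (Suc s2))) z" by (simp add: inst_def)
        then show "?H \<turnstile> Mem z u" using U unfolding U2_def by (intro setI)
      next
        fix s show "insert (All (Iff (Mem 0 (Suc s)) ?\<psi>)) ?G3 \<turnstile> C"
          unfolding Quad_def[symmetric] by (rule W[OF c]) blast
      qed
    qed
  qed
qed


definition "SS s a = All (Iff (Mem 0 (Suc s)) (Disj (Mem 0 (Suc a)) (Eq 0 (Suc a))))"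
lemma succE: assumes ok: "ok \<Gamma>" and c: "\<And>s. insert (SS s a) \<Gamma> \<turnstile> C" shows "\<Gamma> \<turnstile> C"
proof (rule singExE[OF ok, of a])
  fix t let ?G1 = "insert (Sing t a) \<Gamma>"
  have ok1: "ok ?G1" using ok by simp
  show "?G1 \<turnstile> C"
  proof (rule union2E[OF ok1, of a t])
    fix u let ?G3 = "insert (U2 u a t) ?G1"
    have ok3: "ok ?G3" using ok by simp
    let ?\<psi> = "Disj (Mem 0 (Suc a)) (Eq 0 (Suc a))"
    show "?G3 \<turnstile> C"
    proof (rule exactE[OF ok3, where \<psi>="?\<psi>" and u=u])
      show "delta0 ?\<psi>" by (intro delta0.intros)
    next
      fix z let ?H = "insert (inst ?\<psi> z) ?G3"
      have U: "?H \<turnstile> U2 u a t" by (rule hyp) simp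
      have D1: "?H \<turnstile> Sing t a" by (rule hyp) simp
      have "?H \<turnstile> Disj (Mem z a) (Mem z t)"
        apply (rule disjE'[of _ "Mem z a" "Eq z a"])
        apply (rule hyp) apply (simp add: inst_def)
        apply (rule DisjI1) apply (rule hyp1)
        apply (rule DisjI2) apply (rule singI'[OF wk1[OF D1]]) by (rule hyp1)
      then have "?H \<turnstile> inst (Disj (Mem 0 (Suc a)) (Mem 0 (Suc t))) z" by (simp add: inst_def)
      then show "?H \<turnstile> Mem z u" using U unfolding U2_def by (intro setI)
    next
      fix s show "insert (All (Iff (Mem 0 (Suc s)) ?\<psi>)) ?G3 \<turnstile> C"
        unfolding SS_def[symmetric] by (rule W[OF c]) blast
    qed
  qed
qed

lemma sing_uniq: assumes "ok \<Gamma>" "\<Gamma> \<turnstile> Sing z a" "\<Gamma> \<turnstile> Sing s a" shows "\<Gamma> \<turnstile> Eq z s"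
  apply (rule extI[OF assms(1)])
  apply (rule singI'[OF wk1[OF assms(3)]]) apply (rule singE[OF wk1[OF assms(2)]]) apply (rule hyp1)
  apply (rule singI'[OF wk1[OF assms(2)]]) apply (rule singE[OF wk1[OF assms(3)]]) by (rule hyp1)
lemma doub_uniq: assumes "ok \<Gamma>" "\<Gamma> \<turnstile> Doub z a b" "\<Gamma> \<turnstile> Doub s a b" shows "\<Gamma> \<turnstile> Eq z s"
  apply (rule extI[OF assms(1)])
  apply (rule doubI'[OF wk1[OF assms(3)]]) apply (rule doubE[OF wk1[OF assms(2)]]) apply (rule hyp1)
  apply (rule doubI'[OF wk1[OF assms(2)]]) apply (rule doubE[OF wk1[OF assms(3)]]) by (rule hyp1)

lemma sing_eq: "\<Gamma> \<turnstile> Eq s z \<Longrightarrow> \<Gamma> \<turnstile> Sing s a \<Longrightarrow> \<Gamma> \<turnstile> Sing z a"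
  using eqsubst[of \<Gamma> s z "Sing 0 (Suc a)"] by (simp add: inst_def)
lemma doub_eq: "\<Gamma> \<turnstile> Eq s z \<Longrightarrow> \<Gamma> \<turnstile> Doub s a b \<Longrightarrow> \<Gamma> \<turnstile> Doub z a b"
  using eqsubst[of \<Gamma> s z "Doub 0 (Suc a) (Suc b)"] by (simp add: inst_def)

lemma kpExE: assumes ok: "ok \<Gamma>" and c: "\<And>p. insert (KPair p a b) \<Gamma> \<turnstile> C" shows "\<Gamma> \<turnstile> C"
proof (rule singExE[OF ok, of a])
  fix s let ?G1 = "insert (Sing s a) \<Gamma>"
  have ok1: "ok ?G1" using ok by simp
  show "?G1 \<turnstile> C"
  proof (rule upairE[OF ok1, of a b])
    fix d let ?G2 = "insert (Doub d a b) ?G1"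
    have ok2: "ok ?G2" using ok by simp
    show "?G2 \<turnstile> C"
    proof (rule upairE[OF ok2, of s d])
      fix q let ?G3 = "insert (Doub q s d) ?G2"
      have ok3: "ok ?G3" using ok by simp
      have S: "?G3 \<turnstile> Sing s a" by (rule hyp) simp
      have D: "?G3 \<turnstile> Doub d a b" by (rule hyp) simp
      have Q: "?G3 \<turnstile> Doub q s d" by (rule hyp) simp
      have "?G3 \<turnstile> KPair q a b"
      proof (rule kpI[OF ok3])
        fix z
        show "insert (Mem z q) ?G3 \<turnstile> Disj (Sing z a) (Doub z a b)"
          apply (rule disjE'[OF doubE[OF wk1[OF Q] hyp1]])
          apply (rule DisjI1) apply (rule sing_eq[OF eq_sym[OF hyp1]]) apply (rule W[OF S]) apply blast
          apply (rule DisjI2) apply (rule doub_eq[OF eq_sym[OF hyp1]]) apply (rule W[OF D]) by blast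
      next
        fix z
        show "insert (Disj (Sing z a) (Doub z a b)) ?G3 \<turnstile> Mem z q"
          apply (rule disjE'[OF hyp1])
          apply (rule doubI'[OF W[OF Q]]) apply blast apply (rule DisjI1)
          apply (rule sing_uniq) using ok apply simp apply (rule hyp1) apply (rule W[OF S]) apply blast
          apply (rule doubI'[OF W[OF Q]]) apply blast apply (rule DisjI2)
          apply (rule doub_uniq) using ok apply simp apply (rule hyp1) apply (rule W[OF D]) by blast
      qed
      then show "?G3 \<turnstile> C" by (rule cut) (rule W[OF c], blast)
    qed
  qed
qed

lemma kp_inj1: assumes ok: "ok \<Gamma>" and P: "\<Gamma> \<turnstile> KPair p a b" and Q: "\<Gamma> \<turnstile> KPair p c d"
  shows "\<Gamma> \<turnstile> Eq a c"
proof (rule singExE[OF ok, of a])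
  fix s let ?G = "insert (Sing s a) \<Gamma>"
  have S: "?G \<turnstile> Sing s a" by (rule hyp1)
  have sp: "?G \<turnstile> Mem s p" by (rule kpI'[OF wk1[OF P]]) (rule DisjI1[OF S])
  show "?G \<turnstile> Eq a c"
    apply (rule disjE'[OF kpE[OF wk1[OF Q] sp]])
    apply (rule singE[OF hyp1]) apply (rule singI'[OF wk1[OF S] eq_refl])
    apply (rule eq_sym) apply (rule singE[OF wk1[OF S]]) apply (rule doubI'[OF hyp1])
    by (rule DisjI1[OF eq_refl])
qed

lemma kp_inj2_aux: assumes ok: "ok \<Gamma>" and P: "\<Gamma> \<turnstile> KPair p a b" and Q: "\<Gamma> \<turnstile> KPair p c d"
  and bc: "\<Gamma> \<turnstile> Eq b c" shows "\<Gamma> \<turnstile> Eq b d"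
proof (rule upairE[OF ok, of c d])
  fix u let ?G = "insert (Doub u c d) \<Gamma>"
  have ac: "?G \<turnstile> Eq a c" using kp_inj1[OF ok P Q] by (rule wk1)
  have U: "?G \<turnstile> Doub u c d" by (rule hyp1)
  have up: "?G \<turnstile> Mem u p" by (rule kpI'[OF wk1[OF Q]]) (rule DisjI2[OF U])
  have du: "?G \<turnstile> Mem d u" by (rule doubI'[OF U]) (rule DisjI2[OF eq_refl])
  have ba: "?G \<turnstile> Eq b a" by (rule eq_trans[OF wk1[OF bc] eq_sym[OF ac]])
  show "?G \<turnstile> Eq b d"
    apply (rule disjE'[OF kpE[OF wk1[OF P] up]])
    apply (rule eq_trans[OF wk1[OF ba]]) apply (rule eq_sym) apply (rule singE[OF hyp1 wk1[OF du]])
    apply (rule disjE'[OF doubE[OF hyp1 wk1[OF du]]])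
    apply (rule eq_trans[OF W[OF ba]]) apply blast apply (rule eq_sym[OF hyp1])
    by (rule eq_sym[OF hyp1])
qed

lemma kp_inj2: assumes ok: "ok \<Gamma>" and P: "\<Gamma> \<turnstile> KPair p a b" and Q: "\<Gamma> \<turnstile> KPair p c d"
  shows "\<Gamma> \<turnstile> Eq b d"
proof (rule upairE[OF ok, of a b])
  fix t let ?G = "insert (Doub t a b) \<Gamma>"
  have ok1: "ok ?G" using ok by simp
  have T: "?G \<turnstile> Doub t a b" by (rule hyp1)
  have tp: "?G \<turnstile> Mem t p" by (rule kpI'[OF wk1[OF P]]) (rule DisjI2[OF T])
  have bt: "?G \<turnstile> Mem b t" by (rule doubI'[OF T]) (rule DisjI2[OF eq_refl])
  show "?G \<turnstile> Eq b d"
    apply (rule disjE'[OF kpE[OF wk1[OF Q] tp]])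
    apply (rule kp_inj2_aux[OF _ wk1[OF wk1[OF P]] wk1[OF wk1[OF Q]]]) using ok apply simp
    apply (rule singE[OF hyp1 wk1[OF bt]])
    apply (rule disjE'[OF doubE[OF hyp1 wk1[OF bt]]])
    apply (rule kp_inj2_aux[OF _ W[OF P] W[OF Q]]) using ok apply simp apply blast apply blast apply (rule hyp1)
    by (rule hyp1)
qed

lemma found: assumes ok: "ok \<Gamma>" shows "\<Gamma> \<turnstile> Neg (Mem x x)"
proof -
  have "\<Gamma> \<turnstile> inst (Neg (Mem 0 0)) x"
  proof (rule setind[OF ok])
    fix a let ?G = "insert (All (Imp (Mem 0 (Suc a)) (Neg (Mem 0 0)))) \<Gamma>"
    let ?H = "insert (Mem a a) ?G"
    have IH: "?H \<turnstile> All (Imp (Mem 0 (Suc a)) (Neg (Mem 0 0)))" by (rule hyp) simp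
    have "?H \<turnstile> inst (Neg (Mem 0 0)) a" by (rule ballE[OF IH hyp1])
    then have "?H \<turnstile> Neg (Mem a a)" by (simp add: inst_def)
    then have "?H \<turnstile> Fls" using hyp1 by (rule negE)
    then show "?G \<turnstile> inst (Neg (Mem 0 0)) a" by (simp add: inst_def negI)
  qed
  then show ?thesis by (simp add: inst_def)
qed

lemma ord_elem: assumes ok: "ok \<Gamma>" and o: "\<Gamma> \<turnstile> Ord a" and y: "\<Gamma> \<turnstile> Mem y a" shows "\<Gamma> \<turnstile> Ord y"
proof (rule ordI[OF ok])
  show "\<Gamma> \<turnstile> Trans y" by (rule ordE2[OF o y])
  fix z show "insert (Mem z y) \<Gamma> \<turnstile> Trans z"
    apply (rule ordE2[OF wk1[OF o]]) apply (rule transE[OF wk1[OF ordE1[OF o]] wk1[OF y]]) by (rule hyp1)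
qed


definition "Tri a b = Disj (Mem a b) (Disj (Eq a b) (Mem b a))"
lemma ren_Tri[simp]: "ren f (Tri a b) = Tri (f a) (f b)" by (simp add: Tri_def)
lemma tri1: "\<Gamma> \<turnstile> Mem a b \<Longrightarrow> \<Gamma> \<turnstile> Tri a b" unfolding Tri_def by (rule DisjI1)
lemma tri2: "\<Gamma> \<turnstile> Eq a b \<Longrightarrow> \<Gamma> \<turnstile> Tri a b" unfolding Tri_def by (rule DisjI2, rule DisjI1)
lemma tri3: "\<Gamma> \<turnstile> Mem b a \<Longrightarrow> \<Gamma> \<turnstile> Tri a b" unfolding Tri_def by (rule DisjI2, rule DisjI2)
lemma triE: "\<Gamma> \<turnstile> Tri a b \<Longrightarrow> insert (Mem a b) \<Gamma> \<turnstile> C \<Longrightarrow> insert (Eq a b) \<Gamma> \<turnstile> C \<Longrightarrow> insert (Mem b a) \<Gamma> \<turnstile> C \<Longrightarrow> \<Gamma> \<turnstile> C"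
  unfolding Tri_def
  apply (erule disjE', assumption) apply (rule disjE'[OF hyp1])
  apply (rule W, assumption, blast) apply (rule W, assumption, blast) done

abbreviation "E1 a b \<equiv> Ex (Conj (Mem 0 (Suc a)) (Disj (Mem (Suc b) 0) (Eq (Suc b) 0)))"

lemma E1I1: "\<Gamma> \<turnstile> Mem z a \<Longrightarrow> \<Gamma> \<turnstile> Mem b z \<Longrightarrow> \<Gamma> \<turnstile> E1 a b"
  apply (rule bexI, assumption) apply (simp add: inst_def) by (rule DisjI1)
lemma E1I2: "\<Gamma> \<turnstile> Mem z a \<Longrightarrow> \<Gamma> \<turnstile> Eq b z \<Longrightarrow> \<Gamma> \<turnstile> E1 a b"
  apply (rule bexI, assumption) apply (simp add: inst_def) by (rule DisjI2)
lemma E1E: assumes "\<Gamma> \<turnstile> E1 a b" "ok \<Gamma>" "\<Gamma> \<turnstile> Trans a" shows "\<Gamma> \<turnstile> Mem b a"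
  apply (rule bexE[OF assms(1,2)]) apply (simp add: inst_def)
  subgoal for z
  apply (rule disjE'[of _ "Mem b z" "Eq b z"]) apply (rule hyp) apply simp
  apply (rule transE[OF W[OF assms(3)], where y=z]) apply blast apply (rule hyp) apply simp apply (rule hyp1)
  apply (rule eqmem[OF hyp1]) apply (rule hyp) by simp
  done

lemma d0E1: "delta0 (E1 a b)" by (intro delta0.intros)

abbreviation "phi1 \<equiv> Imp (Ord 0) (All (Imp (Ord 0) (Tri (Suc 0) 0)))"
abbreviation "phi2 a \<equiv> Imp (Ord 0) (Tri (Suc a) 0)"

lemma tri_step: assumes ok: "ok \<Gamma>" and rem: "\<Gamma> \<turnstile> REM" and oa: "\<Gamma> \<turnstile> Ord a" and ob: "\<Gamma> \<turnstile> Ord b"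
  and IH1: "\<Gamma> \<turnstile> All (Imp (Mem 0 (Suc a)) phi1)" and IH2: "\<Gamma> \<turnstile> All (Imp (Mem 0 (Suc b)) (phi2 a))"
  shows "\<Gamma> \<turnstile> Tri a b"
proof (rule disjE'[OF lem[OF ok rem d0E1, of a b]])
  show "insert (E1 a b) \<Gamma> \<turnstile> Tri a b"
    apply (rule tri3) apply (rule E1E[OF hyp1]) using ok apply simp by (rule wk1[OF ordE1[OF oa]])
next
  let ?G2 = "insert (Neg (E1 a b)) \<Gamma>"
  have ok2: "ok ?G2" using ok by simp
  have n1: "?G2 \<turnstile> Neg (E1 a b)" by (rule hyp1)
  show "?G2 \<turnstile> Tri a b"
  proof (rule disjE'[OF lem[OF ok2 wk1[OF rem] d0E1, of b a]])
    show "insert (E1 b a) ?G2 \<turnstile> Tri a b"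
      apply (rule tri1) apply (rule E1E[OF hyp1]) using ok apply simp by (rule W[OF ordE1[OF ob]]) blast
  next
    let ?G3 = "insert (Neg (E1 b a)) ?G2"
    have ok3: "ok ?G3" using ok by simp
    have n2: "?G3 \<turnstile> Neg (E1 b a)" by (rule hyp1)
    have "?G3 \<turnstile> Eq a b"
    proof (rule extI[OF ok3])
      fix z let ?H = "insert (Mem z a) ?G3"
      have zo: "?H \<turnstile> Ord z" by (rule ord_elem[OF _ W[OF oa] hyp1]) (use ok in simp, blast)
      have "?H \<turnstile> inst phi1 z" by (rule ballE[OF W[OF IH1] hyp1]) blast
      then have "?H \<turnstile> Imp (Ord z) (All (Imp (Ord 0) (Tri (Suc z) 0)))" by (simp add: inst_def)
      then have "?H \<turnstile> All (Imp (Ord 0) (Tri (Suc z) 0))" using zo by (rule ImpE)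
      then have "?H \<turnstile> inst (Imp (Ord 0) (Tri (Suc z) 0)) b" by (rule AllE)
      then have "?H \<turnstile> Imp (Ord b) (Tri z b)" by (simp add: inst_def)
      then have t: "?H \<turnstile> Tri z b" by (rule ImpE) (rule W[OF ob], blast)
      show "?H \<turnstile> Mem z b"
        apply (rule triE[OF t]) apply (rule hyp1)
        apply (rule negE[OF W[OF n1]]) apply blast apply (rule E1I2[where z=z]) apply (rule hyp) apply simp apply (rule eq_sym[OF hyp1])
        apply (rule negE[OF W[OF n1]]) apply blast apply (rule E1I1[where z=z]) apply (rule hyp) apply simp by (rule hyp1)
    next
      fix z let ?H = "insert (Mem z b) ?G3"
      have zo: "?H \<turnstile> Ord z" by (rule ord_elem[OF _ W[OF ob] hyp1]) (use ok in simp, blast)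
      have "?H \<turnstile> inst (phi2 a) z" by (rule ballE[OF W[OF IH2] hyp1]) blast
      then have "?H \<turnstile> Imp (Ord z) (Tri a z)" by (simp add: inst_def)
      then have t: "?H \<turnstile> Tri a z" using zo by (rule ImpE)
      show "?H \<turnstile> Mem z a"
        apply (rule triE[OF t])
        apply (rule negE[OF W[OF n2]]) apply blast apply (rule E1I1[where z=z]) apply (rule hyp) apply simp apply (rule hyp1)
        apply (rule negE[OF W[OF n2]]) apply blast apply (rule E1I2[where z=z]) apply (rule hyp) apply simp apply (rule hyp1)
        by (rule hyp1)
    qed
    then show "?G3 \<turnstile> Tri a b" by (rule tri2)
  qed
qed

lemma tri: assumes ok: "ok \<Gamma>" and rem: "\<Gamma> \<turnstile> REM" and oa: "\<Gamma> \<turnstile> Ord a" and ob: "\<Gamma> \<turnstile> Ord b"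
  shows "\<Gamma> \<turnstile> Tri a b"
proof -
  have "\<Gamma> \<turnstile> inst phi1 a"
  proof (rule setind[OF ok])
    fix a' let ?G = "insert (All (Imp (Mem 0 (Suc a')) phi1)) \<Gamma>"
    let ?G' = "insert (Ord a') ?G"
    have ok': "ok ?G'" using ok by simp
    have "?G' \<turnstile> All (phi2 a')"
    proof (rule allI'[OF ok'])
      fix x show "?G' \<turnstile> inst (phi2 a') x"
      proof (rule setind[OF ok'])
        fix b' let ?K = "insert (All (Imp (Mem 0 (Suc b')) (phi2 a'))) ?G'"
        have "insert (Ord b') ?K \<turnstile> Tri a' b'"
          apply (rule tri_step) using ok apply simp apply (rule W[OF rem]) apply blast
          apply (rule hyp; simp) apply (rule hyp; simp) apply (rule hyp; simp) by (rule hyp; simp)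
        then show "?K \<turnstile> inst (phi2 a') b'" by (simp add: inst_def ImpI)
      qed
    qed
    then show "?G \<turnstile> inst phi1 a'" by (simp add: inst_def ImpI)
  qed
  then have "\<Gamma> \<turnstile> Imp (Ord a) (All (phi2 a))" by (simp add: inst_def)
  then have "\<Gamma> \<turnstile> All (phi2 a)" using oa by (rule ImpE)
  then have "\<Gamma> \<turnstile> inst (phi2 a) b" by (rule AllE)
  then have "\<Gamma> \<turnstile> Imp (Ord b) (Tri a b)" by (simp add: inst_def)
  then show ?thesis using ob by (rule ImpE)
qed


definition "P3 F D = All (Imp (Mem 0 (Suc D)) (Ex (InPair (Suc 0) 0 (Suc (Suc F)))))"
definition "P4 F D = All (Imp (Mem 0 (Suc F)) (Ex (Conj (Mem 0 (Suc (Suc D))) (Ex (KPair (Suc (Suc 0)) (Suc 0) 0)))))"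
definition "P5 F = All (Imp (Mem 0 (Suc F)) (All (Imp (Mem 0 (Suc (Suc F))) (All (All (All
   (Imp (Conj (KPair (Suc (Suc (Suc (Suc 0)))) (Suc (Suc 0)) (Suc 0)) (KPair (Suc (Suc (Suc 0))) (Suc (Suc 0)) 0)) (Eq (Suc 0) 0))))))))"
definition "P6 F = All (Imp (Mem 0 (Suc F)) (All (All (Imp (KPair (Suc (Suc 0)) (Suc 0) 0) (All (Iff (Mem 0 (Suc 0))
   (Ex (Conj (Mem 0 (Suc (Suc (Suc 0)))) (Ex (Conj (InPair (Suc 0) 0 (Suc (Suc (Suc (Suc (Suc (Suc F))))))) (Conj (Sub (Suc (Suc 0)) 0) (Relpl 0 (Suc (Suc 0))))))))))))))"
lemma PL_eq: "PL a y = Ex (Ex (Conj (Trans 0) (Conj (Mem (Suc (Suc a)) 0) (Conj (P3 (Suc 0) 0) (Conj (P4 (Suc 0) 0)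
   (Conj (P5 (Suc 0)) (Conj (P6 (Suc 0)) (InPair (Suc (Suc a)) (Suc (Suc y)) (Suc 0)))))))))"
  by (simp add: EV P3_def P4_def P5_def P6_def numeral_eq_Suc)
lemma Inj_eq: "dB (nInj 0) = All (All (All (Imp (Conj (Ord (Suc (Suc 0))) (Conj (Ord (Suc 0)) (Conj (PL (Suc (Suc 0)) 0) (PL (Suc 0) 0)))) (Eq (Suc (Suc 0)) (Suc 0)))))"
  by (simp add: EV)
lemma PlUb_eq: "dB (nPlUb 0) = All (Imp (PlOrd 0) (Ex (Conj (PlOrd 0) (Mem (Suc 0) 0))))"
  by (simp add: EV)

lemma ren_P3[simp]: "ren f (P3 F D) = P3 (f F) (f D)" by (simp add: P3_def)
lemma ren_P4[simp]: "ren f (P4 F D) = P4 (f F) (f D)" by (simp add: P4_def)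
lemma ren_P5[simp]: "ren f (P5 F) = P5 (f F)" by (simp add: P5_def)
lemma ren_P6[simp]: "ren f (P6 F) = P6 (f F)" by (simp add: P6_def)

lemma conjH: "insert A (insert B \<Gamma>) \<turnstile> C \<Longrightarrow> insert (Conj A B) \<Gamma> \<turnstile> C"
  apply (rule cut[OF ConjE1[OF hyp1]]) apply (rule cut[OF wk1[OF ConjE2[OF hyp1]]])
  apply (erule W) by blast

lemma conjH': "insert B (insert A \<Gamma>) \<turnstile> C \<Longrightarrow> insert (Conj A B) \<Gamma> \<turnstile> C"
  apply (rule cut[OF ConjE1[OF hyp1]]) apply (rule cut[OF wk1[OF ConjE2[OF hyp1]]])
  apply (erule W) by blast

lemma plE: assumes pl: "\<Gamma> \<turnstile> PL a y" and ok: "ok \<Gamma>"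
  and c: "\<And>F D. insert (Trans D) (insert (Mem a D) (insert (P3 F D) (insert (P4 F D) (insert (P5 F) (insert (P6 F) (insert (InPair a y F) \<Gamma>)))))) \<turnstile> C"
  shows "\<Gamma> \<turnstile> C"
  using pl unfolding PL_eq
  apply (rule exE'[OF _ ok]) apply (simp add: inst_def)
  subgoal for F
  apply (rule exE') apply (rule hyp1) using ok apply simp apply (simp add: inst_def)
  subgoal for D
    apply (rule conjH')+ apply (rule W[OF c[where F=F and D=D]]) by blast
  done done

lemma plI: "\<Gamma> \<turnstile> Trans D \<Longrightarrow> \<Gamma> \<turnstile> Mem a D \<Longrightarrow> \<Gamma> \<turnstile> P3 F D \<Longrightarrow> \<Gamma> \<turnstile> P4 F D \<Longrightarrow> \<Gamma> \<turnstile> P5 F \<Longrightarrow>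
  \<Gamma> \<turnstile> P6 F \<Longrightarrow> \<Gamma> \<turnstile> InPair a y F \<Longrightarrow> \<Gamma> \<turnstile> PL a y"
  unfolding PL_eq apply (rule ExI[where x=F]) apply (simp add: inst_def) apply (rule ExI[where x=D])
  by (simp add: inst_def ConjI)

lemma p3E: "\<Gamma> \<turnstile> P3 F D \<Longrightarrow> \<Gamma> \<turnstile> Mem b D \<Longrightarrow> ok \<Gamma> \<Longrightarrow> (\<And>z. insert (InPair b z F) \<Gamma> \<turnstile> C) \<Longrightarrow> \<Gamma> \<turnstile> C"
  unfolding P3_def apply (drule ballE, assumption) apply (simp add: inst_def)
  apply (erule exE', assumption) by (simp add: inst_def)
lemma p3I: "ok \<Gamma> \<Longrightarrow> (\<And>b. insert (Mem b D) \<Gamma> \<turnstile> Ex (InPair (Suc b) 0 (Suc F))) \<Longrightarrow> \<Gamma> \<turnstile> P3 F D"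
  unfolding P3_def apply (rule ballI, assumption) by (simp add: inst_def)
lemma p3w: "\<Gamma> \<turnstile> InPair b z F \<Longrightarrow> \<Gamma> \<turnstile> Ex (InPair (Suc b) 0 (Suc F))"
  by (rule ExI[where x=z]) (simp add: inst_def)

lemma p4I: "ok \<Gamma> \<Longrightarrow> (\<And>p. insert (Mem p F) \<Gamma> \<turnstile> Ex (Conj (Mem 0 (Suc D)) (Ex (KPair (Suc (Suc p)) (Suc 0) 0)))) \<Longrightarrow> \<Gamma> \<turnstile> P4 F D"
  unfolding P4_def apply (rule ballI, assumption) by (simp add: inst_def)
lemma p4w: "\<Gamma> \<turnstile> Mem b D \<Longrightarrow> \<Gamma> \<turnstile> KPair p b z \<Longrightarrow> \<Gamma> \<turnstile> Ex (Conj (Mem 0 (Suc D)) (Ex (KPair (Suc (Suc p)) (Suc 0) 0)))"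
  apply (rule bexI[where z=b], assumption) apply (simp add: inst_def) apply (rule ExI[where x=z]) by (simp add: inst_def)

lemma p5I: "ok \<Gamma> \<Longrightarrow> (\<And>p q b v v'. insert (KPair p b v) (insert (KPair q b v') (insert (Mem q F) (insert (Mem p F) \<Gamma>))) \<turnstile> Eq v v') \<Longrightarrow> \<Gamma> \<turnstile> P5 F"
  unfolding P5_def apply (rule ballI, assumption) apply (simp add: inst_def)
  apply (rule ballI) apply simp apply (simp add: inst_def)
  apply (rule allI') apply simp apply (simp add: inst_def)
  apply (rule allI') apply simp apply (simp add: inst_def)
  apply (rule allI') apply simp apply (simp add: inst_def)
  apply (rule ImpI) apply (rule conjH) by simp

definition "CH F b w = All (Iff (Mem 0 (Suc w)) (Ex (Conj (Mem 0 (Suc (Suc b))) (Ex (Conj (InPair (Suc 0) 0 (Suc (Suc (Suc F)))) (Conj (Sub (Suc (Suc 0)) 0) (Relpl 0 (Suc (Suc 0)))))))))"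
definition "CRr F b x = Ex (Conj (Mem 0 (Suc b)) (Ex (Conj (InPair (Suc 0) 0 (Suc (Suc F))) (Conj (Sub (Suc (Suc x)) 0) (Relpl 0 (Suc (Suc x)))))))"

lemma p6E: "\<Gamma> \<turnstile> P6 F \<Longrightarrow> \<Gamma> \<turnstile> Mem p F \<Longrightarrow> \<Gamma> \<turnstile> KPair p b w \<Longrightarrow> \<Gamma> \<turnstile> CH F b w"
  unfolding P6_def apply (drule ballE, assumption) apply (simp add: inst_def)
  apply (drule AllE[where x=b]) apply (simp add: inst_def)
  apply (drule AllE[where x=w]) apply (simp add: inst_def)
  apply (drule ImpE, assumption) by (simp add: CH_def)
lemma p6I: "ok \<Gamma> \<Longrightarrow> (\<And>p b w. insert (KPair p b w) (insert (Mem p F) \<Gamma>) \<turnstile> CH F b w) \<Longrightarrow> \<Gamma> \<turnstile> P6 F"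
  unfolding P6_def apply (rule ballI, assumption) apply (simp add: inst_def)
  apply (rule allI') apply simp apply (simp add: inst_def)
  apply (rule allI') apply simp apply (simp add: inst_def)
  apply (rule ImpI) by (simp add: CH_def)

lemma chE: assumes "\<Gamma> \<turnstile> CH F b w" "\<Gamma> \<turnstile> Mem x w" "ok \<Gamma>"
  "\<And>g v. insert (Mem g b) (insert (InPair g v F) (insert (Sub x v) (insert (Relpl v x) \<Gamma>))) \<turnstile> C"
  shows "\<Gamma> \<turnstile> C"
  using setE[OF assms(1)[unfolded CH_def] assms(2)]
  apply (simp add: inst_def)
  apply (erule bexE) apply (rule assms(3)) apply (simp add: inst_def)
  subgoal for g
  apply (rule exE'[OF wk1[OF hyp1]]) using assms(3) apply simp apply (simp add: inst_def)
  subgoal for v apply (rule conjH') apply (rule conjH) apply (rule W[OF assms(4)]) by blast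
  done done

lemma chI': "\<Gamma> \<turnstile> CH F b w \<Longrightarrow> \<Gamma> \<turnstile> Mem g b \<Longrightarrow> \<Gamma> \<turnstile> InPair g v F \<Longrightarrow> \<Gamma> \<turnstile> Sub x v \<Longrightarrow> \<Gamma> \<turnstile> Relpl v x \<Longrightarrow> \<Gamma> \<turnstile> Mem x w"
  unfolding CH_def apply (rule setI, assumption) apply (simp add: inst_def)
  apply (rule bexI[where z=g], assumption) apply (simp add: inst_def) apply (rule ExI[where x=v])
  by (simp add: inst_def ConjI)
lemma chrI: "\<Gamma> \<turnstile> Mem g b \<Longrightarrow> \<Gamma> \<turnstile> InPair g v F \<Longrightarrow> \<Gamma> \<turnstile> Sub x v \<Longrightarrow> \<Gamma> \<turnstile> Relpl v x \<Longrightarrow> \<Gamma> \<turnstile> CRr F b x"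
  unfolding CRr_def
  apply (rule bexI[where z=g], assumption) apply (simp add: inst_def) apply (rule ExI[where x=v])
  by (simp add: inst_def ConjI)
lemma chI: "ok \<Gamma> \<Longrightarrow> (\<And>x g v. insert (Mem g b) (insert (InPair g v F) (insert (Sub x v) (insert (Relpl v x) \<Gamma>))) \<turnstile> Mem x w)
  \<Longrightarrow> (\<And>x. insert (Mem x w) \<Gamma> \<turnstile> CRr F b x) \<Longrightarrow> \<Gamma> \<turnstile> CH F b w"
  unfolding CH_def apply (rule setI') apply assumption
  subgoal for x apply (simp add: inst_def) by (simp add: CRr_def)
  subgoal for x apply (simp add: inst_def)
    apply (rule bexE[OF hyp1]) apply simp apply (simp add: inst_def)
    subgoal for g apply (rule exE'[OF wk1[OF hyp1]]) apply simp apply (simp add: inst_def)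
      subgoal for v apply (rule conjH') apply (rule conjH) apply (rule W) apply assumption by blast
      done
    done
  done


lemma relpl_ord: assumes ok: "ok \<Gamma>" and oA: "\<Gamma> \<turnstile> Ord A" and s: "\<Gamma> \<turnstile> Sub x A" and r: "\<Gamma> \<turnstile> Relpl A x"
  shows "\<Gamma> \<turnstile> Ord x"
proof (rule ordI[OF ok])
  show "\<Gamma> \<turnstile> Trans x"
  proof (rule transI[OF ok])
    fix y z let ?H = "insert (Mem z y) (insert (Mem y x) \<Gamma>)"
    have okH: "ok ?H" using ok by simp
    have yA: "?H \<turnstile> Mem y A" by (rule subE[OF W[OF s]]) (blast, rule hyp, simp)
    have zA: "?H \<turnstile> Mem z A" by (rule transE[OF W[OF ordE1[OF oA]] yA hyp1]) blast
    have ty: "?H \<turnstile> Trans y" by (rule ordE2[OF W[OF oA] yA]) blast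
    have sz: "?H \<turnstile> Sub z y"
      by (rule subI[OF okH]) (rule transE[OF wk1[OF ty] wk1[OF hyp1] hyp1])
    have yx: "?H \<turnstile> Mem y x" by (rule hyp) simp
    show "?H \<turnstile> Mem z x" by (rule relplE[OF W[OF r] yx zA sz]) blast
  qed
next
  fix y show "insert (Mem y x) \<Gamma> \<turnstile> Trans y"
    by (rule ordE2[OF wk1[OF oA]]) (rule subE[OF wk1[OF s] hyp1])
qed

lemma gb_case: assumes ok: "ok \<Gamma>" and rem: "\<Gamma> \<turnstile> REM" and oA: "\<Gamma> \<turnstile> Ord A" and bA: "\<Gamma> \<turnstile> Mem b A"
  and gb: "\<Gamma> \<turnstile> Sub g b" and r: "\<Gamma> \<turnstile> Relpl A g"
  shows "\<Gamma> \<turnstile> Disj (Mem g b) (Eq g b)"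
proof -
  have ob: "\<Gamma> \<turnstile> Ord b" by (rule ord_elem[OF ok oA bA])
  have gA: "\<Gamma> \<turnstile> Sub g A"
    by (rule subI[OF ok]) (rule transE[OF wk1[OF ordE1[OF oA]] wk1[OF bA] subE[OF wk1[OF gb] hyp1]])
  have og: "\<Gamma> \<turnstile> Ord g" by (rule relpl_ord[OF ok oA gA r])
  show ?thesis
    apply (rule triE[OF tri[OF ok rem og ob]])
    apply (rule DisjI1[OF hyp1]) apply (rule DisjI2[OF hyp1])
    apply (rule negE[OF found[of _ b]]) using ok apply simp
    by (rule subE[OF wk1[OF gb] hyp1])
qed

lemma ord_plord: assumes ok: "ok \<Gamma>" and rem: "\<Gamma> \<turnstile> REM" and oA: "\<Gamma> \<turnstile> Ord A" shows "\<Gamma> \<turnstile> PlOrd A"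
proof (rule plordI[OF ok oA])
  fix b g let ?H = "insert (Relpl A g) (insert (Sub g b) (insert (Mem b A) \<Gamma>))"
  have okH: "ok ?H" using ok by simp
  have c: "?H \<turnstile> Disj (Mem g b) (Eq g b)"
    by (rule gb_case[OF okH W[OF rem] W[OF oA]]) (blast, blast, (rule hyp, simp)+)
  show "?H \<turnstile> Mem g A"
    apply (rule disjE'[OF c])
    apply (rule transE[OF W[OF ordE1[OF oA]], where y=b]) apply blast apply (rule hyp, simp) apply (rule hyp1)
    apply (rule eqmem[OF hyp1]) by (rule hyp, simp)
next
  fix b g d let ?H = "insert (Mem b d) (insert (Mem d A) (insert (Relpl A g) (insert (Sub g b) (insert (Mem b A) \<Gamma>))))"
  have okH: "ok ?H" using ok by simp
  have c: "?H \<turnstile> Disj (Mem g b) (Eq g b)"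
    by (rule gb_case[OF okH W[OF rem] W[OF oA]]) (blast, blast, (rule hyp, simp)+)
  have td: "?H \<turnstile> Trans d" by (rule ordE2[OF W[OF oA]]) (blast, rule hyp, simp)
  show "?H \<turnstile> Mem g d"
    apply (rule disjE'[OF c])
    apply (rule transE[OF wk1[OF td], where y=b]) apply (rule hyp, simp) apply (rule hyp1)
    apply (rule eqmem[OF hyp1]) by (rule hyp, simp)
qed

lemma plub: assumes ok: "ok \<Gamma>" and rem: "\<Gamma> \<turnstile> REM" shows "\<Gamma> \<turnstile> dB (nPlUb 0)"
  unfolding PlUb_eq
proof (rule allI'[OF ok])
  fix a
  let ?G = "insert (PlOrd a) \<Gamma>"
  have okG: "ok ?G" using ok by simp
  have oa: "?G \<turnstile> Ord a" by (rule plordE1[OF hyp1])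
  have "?G \<turnstile> Ex (Conj (PlOrd 0) (Mem (Suc a) 0))"
  proof (rule succE[OF okG, of a])
    fix s let ?H = "insert (SS s a) ?G"
    have okH: "ok ?H" using ok by simp
    have S: "?H \<turnstile> All (Iff (Mem 0 (Suc s)) (Disj (Mem 0 (Suc a)) (Eq 0 (Suc a))))" unfolding SS_def[symmetric] by (rule hyp1)
    have oaH: "?H \<turnstile> Ord a" by (rule wk1[OF oa])
    have mem_cases: "?H \<turnstile> Disj (Mem y a) (Eq y a)" if "?H \<turnstile> Mem y s" for y
      using setE[OF S that] by (simp add: inst_def)
    have ts: "?H \<turnstile> Trans s"
    proof (rule transI[OF okH])
      fix y z let ?K = "insert (Mem z y) (insert (Mem y s) ?H)"
      have SK: "?K \<turnstile> All (Iff (Mem 0 (Suc s)) (Disj (Mem 0 (Suc a)) (Eq 0 (Suc a))))" by (rule W[OF S]) blast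
      have yS: "?K \<turnstile> Mem y s" by (rule hyp) simp
      have c: "?K \<turnstile> Disj (Mem y a) (Eq y a)" using setE[OF SK yS] by (simp add: inst_def)
      have "?K \<turnstile> Mem z a"
        apply (rule disjE'[OF c])
        apply (rule transE[OF W[OF ordE1[OF oaH]], where y=y]) apply blast apply (rule hyp1) apply (rule hyp, simp)
        apply (rule eq_mem2[OF hyp1]) by (rule hyp, simp)
      then show "?K \<turnstile> Mem z s"
        apply - apply (rule setI[OF W[OF S]]) apply blast apply (simp add: inst_def) by (rule DisjI1)
    qed
    have os: "?H \<turnstile> Ord s"
    proof (rule ordI[OF okH ts])
      fix y let ?K = "insert (Mem y s) ?H"
      have c: "?K \<turnstile> Disj (Mem y a) (Eq y a)" using setE[OF wk1[OF S] hyp1, of y] by (simp add: inst_def)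
      show "?K \<turnstile> Trans y"
        apply (rule disjE'[OF c])
        apply (rule ordE2[OF W[OF oaH] hyp1]) apply blast
        using eqsubst[of "insert (Eq y a) ?K" a y "Trans 0"] W[OF ordE1[OF oaH], of "insert (Eq y a) ?K"]
          eq_sym[OF hyp1, of y a ?K]
        by (simp add: inst_def) blast
    qed
    have ps: "?H \<turnstile> PlOrd s" by (rule ord_plord[OF okH W[OF rem] os]) blast
    have as: "?H \<turnstile> Mem a s" apply (rule setI[OF S]) apply (simp add: inst_def) by (rule DisjI2[OF eq_refl])
    show "?H \<turnstile> Ex (Conj (PlOrd 0) (Mem (Suc a) 0))"
      apply (rule ExI[where x=s]) apply (simp add: inst_def) by (rule ConjI[OF ps as])
  qed
  then show "\<Gamma> \<turnstile> inst (Imp (PlOrd 0) (Ex (Conj (PlOrd 0) (Mem (Suc 0) 0)))) a"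
    by (simp add: inst_def ImpI)
qed


abbreviation "psi F D \<equiv> Imp (Mem 0 (Suc D)) (Imp (Ord 0) (All (Imp (InPair (Suc 0) 0 (Suc (Suc F))) (Eq 0 (Suc 0)))))"

lemma ih_use: assumes IH: "\<Gamma> \<turnstile> All (Imp (Mem 0 (Suc b)) (psi F D))" and "\<Gamma> \<turnstile> Mem g b" "\<Gamma> \<turnstile> Mem g D"
  "\<Gamma> \<turnstile> Ord g" "\<Gamma> \<turnstile> InPair g v F" shows "\<Gamma> \<turnstile> Eq v g"
proof -
  have "\<Gamma> \<turnstile> inst (psi F D) g" by (rule ballE[OF IH assms(2)])
  then have "\<Gamma> \<turnstile> Imp (Mem g D) (Imp (Ord g) (All (Imp (InPair (Suc g) 0 (Suc F)) (Eq 0 (Suc g)))))"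
    by (simp add: inst_def)
  then have "\<Gamma> \<turnstile> All (Imp (InPair (Suc g) 0 (Suc F)) (Eq 0 (Suc g)))" using assms(3,4) by (meson ImpE)
  then have "\<Gamma> \<turnstile> inst (Imp (InPair (Suc g) 0 (Suc F)) (Eq 0 (Suc g))) v" by (rule AllE)
  then have "\<Gamma> \<turnstile> Imp (InPair g v F) (Eq v g)" by (simp add: inst_def)
  then show ?thesis using assms(5) by (rule ImpE)
qed

lemma sub_refl: "ok \<Gamma> \<Longrightarrow> \<Gamma> \<turnstile> Sub x x" apply (rule subI, assumption) by (rule hyp1)
lemma relpl_refl: "ok \<Gamma> \<Longrightarrow> \<Gamma> \<turnstile> Relpl x x" apply (rule relplI, assumption) by (rule hyp, simp)
lemma sub_eq2: "\<Gamma> \<turnstile> Eq v g \<Longrightarrow> \<Gamma> \<turnstile> Sub x v \<Longrightarrow> \<Gamma> \<turnstile> Sub x g"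
  using eqsubst[of \<Gamma> v g "Sub (Suc x) 0"] by (simp add: inst_def)
lemma relpl_eq1: "\<Gamma> \<turnstile> Eq v g \<Longrightarrow> \<Gamma> \<turnstile> Relpl v x \<Longrightarrow> \<Gamma> \<turnstile> Relpl g x"
  using eqsubst[of \<Gamma> v g "Relpl 0 (Suc x)"] by (simp add: inst_def)

lemma pl_step: assumes ok: "ok \<Gamma>" and rem: "\<Gamma> \<turnstile> REM" and tD: "\<Gamma> \<turnstile> Trans D" and p3: "\<Gamma> \<turnstile> P3 F D"
  and p6: "\<Gamma> \<turnstile> P6 F" and IH: "\<Gamma> \<turnstile> All (Imp (Mem 0 (Suc b)) (psi F D))" and bD: "\<Gamma> \<turnstile> Mem b D"
  and ob: "\<Gamma> \<turnstile> Ord b" and bw: "\<Gamma> \<turnstile> InPair b w F"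
  shows "\<Gamma> \<turnstile> Eq w b"
proof (rule inpE[OF bw ok])
  fix p let ?G = "insert (Mem p F) (insert (KPair p b w) \<Gamma>)"
  have okG: "ok ?G" using ok by simp
  have ch: "?G \<turnstile> CH F b w" by (rule p6E[OF W[OF p6], where p=p]) (blast, (rule hyp, simp)+)
  show "?G \<turnstile> Eq w b"
  proof (rule extI[OF okG])
    fix x let ?H = "insert (Mem x w) ?G"
    have okH: "ok ?H" using ok by simp
    show "?H \<turnstile> Mem x b"
    proof (rule chE[OF W[OF ch] hyp1 okH])
      show "?G \<subseteq> ?H" by blast
      fix g v let ?K = "insert (Mem g b) (insert (InPair g v F) (insert (Sub x v) (insert (Relpl v x) ?H)))"
      have okK: "ok ?K" using ok by simp
      have gb: "?K \<turnstile> Mem g b" by (rule hyp1)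
      have gD: "?K \<turnstile> Mem g D" by (rule transE[OF W[OF tD] W[OF bD] gb]) blast+
      have og: "?K \<turnstile> Ord g" by (rule ord_elem[OF okK W[OF ob] gb]) blast
      have vg: "?K \<turnstile> Eq v g" by (rule ih_use[OF W[OF IH] gb gD og]) (blast, rule hyp, simp)
      have sxg: "?K \<turnstile> Sub x g" by (rule sub_eq2[OF vg]) (rule hyp, simp)
      have rgx: "?K \<turnstile> Relpl g x" by (rule relpl_eq1[OF vg]) (rule hyp, simp)
      have ox: "?K \<turnstile> Ord x" by (rule relpl_ord[OF okK og sxg rgx])
      show "?K \<turnstile> Mem x b"
        apply (rule triE[OF tri[OF okK W[OF rem] ox og]]) apply blast
        apply (rule transE[OF W[OF ordE1[OF ob]] wk1[OF gb] hyp1]) apply blast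
        apply (rule eqmem[OF hyp1 wk1[OF gb]])
        apply (rule negE[OF found[of _ g]]) using ok apply simp
        by (rule subE[OF wk1[OF sxg] hyp1])
    qed
  next
    fix x let ?H = "insert (Mem x b) ?G"
    have okH: "ok ?H" using ok by simp
    have xb: "?H \<turnstile> Mem x b" by (rule hyp1)
    have xD: "?H \<turnstile> Mem x D" by (rule transE[OF W[OF tD] W[OF bD] xb]) blast+
    have ox: "?H \<turnstile> Ord x" by (rule ord_elem[OF okH W[OF ob] xb]) blast
    show "?H \<turnstile> Mem x w"
    proof (rule p3E[OF W[OF p3] xD okH])
      show "\<Gamma> \<subseteq> ?H" by blast
      fix z let ?K = "insert (InPair x z F) ?H"
      have okK: "ok ?K" using ok by simp
      have zx: "?K \<turnstile> Eq z x" by (rule ih_use[OF W[OF IH] wk1[OF xb] wk1[OF xD] wk1[OF ox] hyp1]) blast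
      have xz: "?K \<turnstile> Eq x z" by (rule eq_sym[OF zx])
      show "?K \<turnstile> Mem x w"
        apply (rule chI'[OF W[OF ch] wk1[OF xb] hyp1]) apply blast
        apply (rule sub_eq2[OF xz sub_refl[OF okK]])
        by (rule relpl_eq1[OF xz relpl_refl[OF okK]])
    qed
  qed
qed

lemma pl_id: assumes ok: "ok \<Gamma>" and rem: "\<Gamma> \<turnstile> REM" and oa: "\<Gamma> \<turnstile> Ord a" and pl: "\<Gamma> \<turnstile> PL a y"
  shows "\<Gamma> \<turnstile> Eq y a"
proof (rule plE[OF pl ok])
  fix F D
  let ?G = "insert (Trans D) (insert (Mem a D) (insert (P3 F D) (insert (P4 F D) (insert (P5 F) (insert (P6 F) (insert (InPair a y F) \<Gamma>))))))"
  have okG: "ok ?G" using ok by simp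
  have ind: "?G \<turnstile> inst (psi F D) x" for x
  proof (rule setind[OF okG])
    fix b let ?H = "insert (All (Imp (Mem 0 (Suc b)) (psi F D))) ?G"
    let ?K = "insert (Ord b) (insert (Mem b D) ?H)"
    have "?K \<turnstile> All (Imp (InPair (Suc b) 0 (Suc F)) (Eq 0 (Suc b)))"
    proof (rule allI')
      show "ok ?K" using ok by simp
      fix w
      have "insert (InPair b w F) ?K \<turnstile> Eq w b"
        apply (rule pl_step[where F=F and D=D]) using ok apply simp apply (rule W[OF rem], blast)
        by (rule hyp, simp)+
      then show "?K \<turnstile> inst (Imp (InPair (Suc b) 0 (Suc F)) (Eq 0 (Suc b))) w"
        by (simp add: inst_def ImpI)
    qed
    then show "?H \<turnstile> inst (psi F D) b" by (simp add: inst_def ImpI)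
  qed
  have "?G \<turnstile> Imp (Mem a D) (Imp (Ord a) (All (Imp (InPair (Suc a) 0 (Suc F)) (Eq 0 (Suc a)))))"
    using ind[of a] by (simp add: inst_def)
  moreover have m1: "?G \<turnstile> Mem a D" by (rule hyp) simp
  ultimately have "?G \<turnstile> Imp (Ord a) (All (Imp (InPair (Suc a) 0 (Suc F)) (Eq 0 (Suc a))))" by (rule ImpE)
  moreover have oaG: "?G \<turnstile> Ord a" by (rule W[OF oa]) blast
  ultimately have "?G \<turnstile> All (Imp (InPair (Suc a) 0 (Suc F)) (Eq 0 (Suc a)))" by (rule ImpE)
  then have "?G \<turnstile> inst (Imp (InPair (Suc a) 0 (Suc F)) (Eq 0 (Suc a))) y" by (rule AllE)
  then have "?G \<turnstile> Imp (InPair a y F) (Eq y a)" by (simp add: inst_def)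
  then show "?G \<turnstile> Eq y a" by (rule ImpE) (rule hyp, simp)
qed

lemma inj: assumes ok: "ok \<Gamma>" and rem: "\<Gamma> \<turnstile> REM" shows "\<Gamma> \<turnstile> dB (nInj 0)"
  unfolding Inj_eq
  apply (rule allI'[OF ok]) apply (simp add: inst_def)
  subgoal for a apply (rule allI'[OF ok]) apply (simp add: inst_def)
  subgoal for b apply (rule allI'[OF ok]) apply (simp add: inst_def)
  subgoal for y apply (rule ImpI) apply (rule conjH')+
  proof -
    let ?G = "insert (PL b y) (insert (PL a y) (insert (Ord b) (insert (Ord a) \<Gamma>)))"
    have okG: "ok ?G" using ok by simp
    have "?G \<turnstile> Eq y a" by (rule pl_id[OF okG W[OF rem]]) (blast, (rule hyp, simp)+)
    moreover have "?G \<turnstile> Eq y b" by (rule pl_id[OF okG W[OF rem]]) (blast, (rule hyp, simp)+)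
    ultimately show "?G \<turnstile> Eq a b" by (meson eq_sym eq_trans)
  qed done done done


definition "Fx u Y = All (Iff (Mem 0 (Suc Y)) (Ex (Conj (Mem 0 (Suc (Suc u))) (Conj (Sub (Suc 0) 0) (Relpl 0 (Suc 0))))))"
definition "FR u x = Ex (Conj (Mem 0 (Suc u)) (Conj (Sub (Suc x) 0) (Relpl 0 (Suc x))))"
lemma ren_Fx[simp]: "ren f (Fx u Y) = Fx (f u) (f Y)" by (simp add: Fx_def)
lemma ren_CH[simp]: "ren f (CH F b w) = CH (f F) (f b) (f w)" by (simp add: CH_def)
lemma ren_U2[simp]: "ren f (U2 s a b) = U2 (f s) (f a) (f b)" by (simp add: U2_def)
lemma ren_Quad[simp]: "ren f (Quad s a b c d) = Quad (f s) (f a) (f b) (f c) (f d)" by (simp add: Quad_def)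
lemma ren_SS[simp]: "ren f (SS s a) = SS (f s) (f a)" by (simp add: SS_def)

lemma conjH2: assumes h: "insert X (insert A (insert B \<Gamma>)) \<turnstile> C" shows "insert X (insert (Conj A B) \<Gamma>) \<turnstile> C"
proof -
  have c: "insert X (insert (Conj A B) \<Gamma>) \<turnstile> Conj A B" by (rule hyp) simp
  show ?thesis by (rule cut[OF ConjE1[OF c]], rule cut[OF wk1[OF ConjE2[OF c]]], rule W[OF h], blast)
qed

lemma fxE: assumes "\<Gamma> \<turnstile> Fx u Y" "\<Gamma> \<turnstile> Mem x Y" "ok \<Gamma>"
  "\<And>g. insert (Mem g u) (insert (Sub x g) (insert (Relpl g x) \<Gamma>)) \<turnstile> C" shows "\<Gamma> \<turnstile> C"
  using setE[OF assms(1)[unfolded Fx_def] assms(2)]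
  apply (simp add: inst_def)
  apply (erule bexE) apply (rule assms(3)) apply (simp add: inst_def)
  subgoal for g apply (rule conjH2) apply (rule W[OF assms(4)]) by blast
  done
lemma fxI': "\<Gamma> \<turnstile> Fx u Y \<Longrightarrow> \<Gamma> \<turnstile> Mem g u \<Longrightarrow> \<Gamma> \<turnstile> Sub x g \<Longrightarrow> \<Gamma> \<turnstile> Relpl g x \<Longrightarrow> \<Gamma> \<turnstile> Mem x Y"
  unfolding Fx_def apply (rule setI, assumption) apply (simp add: inst_def)
  apply (rule bexI[where z=g], assumption) by (simp add: inst_def ConjI)
lemma frI: "\<Gamma> \<turnstile> Mem g u \<Longrightarrow> \<Gamma> \<turnstile> Sub x g \<Longrightarrow> \<Gamma> \<turnstile> Relpl g x \<Longrightarrow> \<Gamma> \<turnstile> FR u x"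
  unfolding FR_def apply (rule bexI[where z=g], assumption) by (simp add: inst_def ConjI)
lemma fxI: "ok \<Gamma> \<Longrightarrow> (\<And>x. insert (Mem x Y) \<Gamma> \<turnstile> FR u x) \<Longrightarrow>
  (\<And>x g. insert (Mem g u) (insert (Sub x g) (insert (Relpl g x) \<Gamma>)) \<turnstile> Mem x Y) \<Longrightarrow> \<Gamma> \<turnstile> Fx u Y"
  unfolding Fx_def apply (rule setI') apply assumption
  subgoal for x apply (simp add: inst_def) by (simp add: FR_def)
  subgoal for x apply (simp add: inst_def)
    apply (rule bexE[OF hyp1]) apply simp apply (simp add: inst_def)
    subgoal for g apply (rule conjH2) apply (rule W) apply assumption by blast
    done
  done

lemma quadC: assumes "\<Gamma> \<turnstile> Quad s a b c d" "\<Gamma> \<turnstile> Mem z s"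
  "insert (Eq z a) \<Gamma> \<turnstile> C" "insert (Eq z b) \<Gamma> \<turnstile> C" "insert (Eq z c) \<Gamma> \<turnstile> C" "insert (Eq z d) \<Gamma> \<turnstile> C"
  shows "\<Gamma> \<turnstile> C"
proof -
  have "\<Gamma> \<turnstile> Disj (Disj (Eq z a) (Eq z b)) (Disj (Eq z c) (Eq z d))"
    using setE[OF assms(1)[unfolded Quad_def] assms(2)] by (simp add: inst_def)
  then show ?thesis
    apply (rule disjE')
    apply (rule disjE'[OF hyp1]) apply (rule W[OF assms(3)], blast) apply (rule W[OF assms(4)], blast)
    apply (rule disjE'[OF hyp1]) apply (rule W[OF assms(5)], blast) by (rule W[OF assms(6)], blast)
qed
lemma quadI1: "\<Gamma> \<turnstile> Quad s a b c d \<Longrightarrow> \<Gamma> \<turnstile> Mem a s"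
  unfolding Quad_def apply (rule setI, assumption) apply (simp add: inst_def) by (rule DisjI1, rule DisjI1, rule eq_refl)
lemma quadI2: "\<Gamma> \<turnstile> Quad s a b c d \<Longrightarrow> \<Gamma> \<turnstile> Mem b s"
  unfolding Quad_def apply (rule setI, assumption) apply (simp add: inst_def) by (rule DisjI1, rule DisjI2, rule eq_refl)
lemma quadI3: "\<Gamma> \<turnstile> Quad s a b c d \<Longrightarrow> \<Gamma> \<turnstile> Mem c s"
  unfolding Quad_def apply (rule setI, assumption) apply (simp add: inst_def) by (rule DisjI2, rule DisjI1, rule eq_refl)
lemma quadI4: "\<Gamma> \<turnstile> Quad s a b c d \<Longrightarrow> \<Gamma> \<turnstile> Mem d s"
  unfolding Quad_def apply (rule setI, assumption) apply (simp add: inst_def) by (rule DisjI2, rule DisjI2, rule eq_refl)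

lemma u2C: assumes "\<Gamma> \<turnstile> U2 s a b" "\<Gamma> \<turnstile> Mem z s" "insert (Mem z a) \<Gamma> \<turnstile> C" "insert (Mem z b) \<Gamma> \<turnstile> C"
  shows "\<Gamma> \<turnstile> C"
  using setE[OF assms(1)[unfolded U2_def] assms(2)] apply (simp add: inst_def)
  apply (erule disjE') by (rule assms(3), rule assms(4))
lemma u2I1: "\<Gamma> \<turnstile> U2 s a b \<Longrightarrow> \<Gamma> \<turnstile> Mem z a \<Longrightarrow> \<Gamma> \<turnstile> Mem z s"
  unfolding U2_def apply (rule setI, assumption) apply (simp add: inst_def) by (rule DisjI1)
lemma u2I2: "\<Gamma> \<turnstile> U2 s a b \<Longrightarrow> \<Gamma> \<turnstile> Mem z b \<Longrightarrow> \<Gamma> \<turnstile> Mem z s"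
  unfolding U2_def apply (rule setI, assumption) apply (simp add: inst_def) by (rule DisjI2)
lemma ssC: assumes "\<Gamma> \<turnstile> SS s a" "\<Gamma> \<turnstile> Mem z s" "insert (Mem z a) \<Gamma> \<turnstile> C" "insert (Eq z a) \<Gamma> \<turnstile> C"
  shows "\<Gamma> \<turnstile> C"
  using setE[OF assms(1)[unfolded SS_def] assms(2)] apply (simp add: inst_def)
  apply (erule disjE') by (rule assms(3), rule assms(4))
lemma ssI1: "\<Gamma> \<turnstile> SS s a \<Longrightarrow> \<Gamma> \<turnstile> Mem z a \<Longrightarrow> \<Gamma> \<turnstile> Mem z s"
  unfolding SS_def apply (rule setI, assumption) apply (simp add: inst_def) by (rule DisjI1)
lemma ssI2: "\<Gamma> \<turnstile> SS s a \<Longrightarrow> \<Gamma> \<turnstile> Eq z a \<Longrightarrow> \<Gamma> \<turnstile> Mem z s"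
  unfolding SS_def apply (rule setI, assumption) apply (simp add: inst_def) by (rule DisjI2)

lemma kp_eq: "\<Gamma> \<turnstile> Eq p q \<Longrightarrow> \<Gamma> \<turnstile> KPair p a b \<Longrightarrow> \<Gamma> \<turnstile> KPair q a b"
  using eqsubst[of \<Gamma> p q "KPair 0 (Suc a) (Suc b)"] by (simp add: inst_def)
lemma inp_eq1: "\<Gamma> \<turnstile> Eq a c \<Longrightarrow> \<Gamma> \<turnstile> InPair a b F \<Longrightarrow> \<Gamma> \<turnstile> InPair c b F"
  using eqsubst[of \<Gamma> a c "InPair 0 (Suc b) (Suc F)"] by (simp add: inst_def)
lemma inp_eq12: "\<Gamma> \<turnstile> Eq a c \<Longrightarrow> \<Gamma> \<turnstile> InPair a a F \<Longrightarrow> \<Gamma> \<turnstile> InPair c c F"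
  using eqsubst[of \<Gamma> a c "InPair 0 0 (Suc F)"] by (simp add: inst_def)
lemma fx_eq: "\<Gamma> \<turnstile> Eq a c \<Longrightarrow> \<Gamma> \<turnstile> Fx a a \<Longrightarrow> \<Gamma> \<turnstile> Fx c c"
  using eqsubst[of \<Gamma> a c "Fx 0 0"] by (simp add: inst_def)
lemma ch_eq2: "\<Gamma> \<turnstile> Eq b c \<Longrightarrow> \<Gamma> \<turnstile> CH F b w \<Longrightarrow> \<Gamma> \<turnstile> CH F c w"
  using eqsubst[of \<Gamma> b c "CH (Suc F) 0 (Suc w)"] by (simp add: inst_def)
lemma ch_eq3: "\<Gamma> \<turnstile> Eq w c \<Longrightarrow> \<Gamma> \<turnstile> CH F b w \<Longrightarrow> \<Gamma> \<turnstile> CH F b c"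
  using eqsubst[of \<Gamma> w c "CH (Suc F) (Suc b) 0"] by (simp add: inst_def)


lemma notAA: "ok \<Delta> \<Longrightarrow> \<Delta> \<turnstile> Mem u A \<Longrightarrow> \<Delta> \<turnstile> Eq u A \<Longrightarrow> \<Delta> \<turnstile> C"
  apply (rule negE[OF found[of _ A]], assumption) by (rule eq_mem1)

lemma idcase: assumes ok: "ok \<Delta>" and "\<Delta> \<turnstile> Eq p q" "\<Delta> \<turnstile> KPair q t t" "\<Delta> \<turnstile> Mem t A" "\<Delta> \<turnstile> KPair p u v"
  shows "\<Delta> \<turnstile> Disj (Conj (Mem u A) (Eq v u)) (Conj (Eq u A) (Eq v Y))"
proof -
  have pt: "\<Delta> \<turnstile> KPair p t t" by (rule kp_eq[OF eq_sym[OF assms(2)] assms(3)])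
  have tu: "\<Delta> \<turnstile> Eq t u" by (rule kp_inj1[OF ok pt assms(5)])
  have tv: "\<Delta> \<turnstile> Eq t v" by (rule kp_inj2[OF ok pt assms(5)])
  show ?thesis apply (rule DisjI1) apply (rule ConjI)
    apply (rule eqmem[OF eq_sym[OF tu] assms(4)]) by (rule eq_trans[OF eq_sym[OF tv] tu])
qed

context
  fixes \<Gamma> :: "fm set" and A Y a b c d pa pb pc pd pA Qf Sg F D :: nat
  assumes okG: "ok \<Gamma>"
  and hQ: "\<Gamma> \<turnstile> Quad A a b c d" and htA: "\<Gamma> \<turnstile> Trans A"
  and hfa: "\<Gamma> \<turnstile> Fx a a" and hfb: "\<Gamma> \<turnstile> Fx b b" and hfc: "\<Gamma> \<turnstile> Fx c c" and hfd: "\<Gamma> \<turnstile> Fx d d"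
  and hfY: "\<Gamma> \<turnstile> Fx A Y"
  and hpa: "\<Gamma> \<turnstile> KPair pa a a" and hpb: "\<Gamma> \<turnstile> KPair pb b b" and hpc: "\<Gamma> \<turnstile> KPair pc c c"
  and hpd: "\<Gamma> \<turnstile> KPair pd d d" and hpA: "\<Gamma> \<turnstile> KPair pA A Y"
  and hQ4: "\<Gamma> \<turnstile> Quad Qf pa pb pc pd" and hSg: "\<Gamma> \<turnstile> Sing Sg pA" and hF: "\<Gamma> \<turnstile> U2 F Qf Sg"
  and hD: "\<Gamma> \<turnstile> SS D A"
begin

lemma fpair: assumes sub: "\<Gamma> \<subseteq> \<Delta>" and ok: "ok \<Delta>" and pF: "\<Delta> \<turnstile> Mem p F" and P: "\<Delta> \<turnstile> KPair p u v"
  shows "\<Delta> \<turnstile> Disj (Conj (Mem u A) (Eq v u)) (Conj (Eq u A) (Eq v Y))"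
proof (rule u2C[OF W[OF hF sub] pF])
  let ?H = "insert (Mem p Qf) \<Delta>"
  have okH: "ok ?H" using ok by simp
  have s: "\<Gamma> \<subseteq> insert (Eq p x) ?H" for x using sub by blast
  show "?H \<turnstile> Disj (Conj (Mem u A) (Eq v u)) (Conj (Eq u A) (Eq v Y))"
    apply (rule quadC[OF W[OF hQ4] hyp1]) using sub apply blast
    apply (rule idcase[OF _ hyp1 W[OF hpa s] W[OF quadI1[OF hQ] s] wk2[OF P]]) using ok apply simp
    apply (rule idcase[OF _ hyp1 W[OF hpb s] W[OF quadI2[OF hQ] s] wk2[OF P]]) using ok apply simp
    apply (rule idcase[OF _ hyp1 W[OF hpc s] W[OF quadI3[OF hQ] s] wk2[OF P]]) using ok apply simp
    apply (rule idcase[OF _ hyp1 W[OF hpd s] W[OF quadI4[OF hQ] s] wk2[OF P]]) using ok by simp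
next
  let ?H = "insert (Mem p Sg) \<Delta>"
  have okH: "ok ?H" using ok by simp
  have s: "\<Gamma> \<subseteq> ?H" using sub by blast
  have e: "?H \<turnstile> Eq p pA" by (rule singE[OF W[OF hSg s] hyp1])
  have pt: "?H \<turnstile> KPair p A Y" by (rule kp_eq[OF eq_sym[OF e] W[OF hpA s]])
  show "?H \<turnstile> Disj (Conj (Mem u A) (Eq v u)) (Conj (Eq u A) (Eq v Y))"
    apply (rule DisjI2) apply (rule ConjI)
    apply (rule eq_sym[OF kp_inj1[OF okH pt wk1[OF P]]])
    by (rule eq_sym[OF kp_inj2[OF okH pt wk1[OF P]]])
qed

lemma Kl: assumes sub: "\<Gamma> \<subseteq> \<Delta>" and ok: "ok \<Delta>" and gA: "\<Delta> \<turnstile> Mem g A" and ip: "\<Delta> \<turnstile> InPair g v F"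
  shows "\<Delta> \<turnstile> Eq v g"
proof (rule inpE[OF ip ok])
  fix p let ?H = "insert (Mem p F) (insert (KPair p g v) \<Delta>)"
  have okH: "ok ?H" using ok by simp
  have "?H \<turnstile> Disj (Conj (Mem g A) (Eq v g)) (Conj (Eq g A) (Eq v Y))"
    by (rule fpair[OF _ okH hyp1]) (use sub in blast, rule hyp, simp)
  then show "?H \<turnstile> Eq v g"
    apply (rule disjE') apply (rule ConjE2[OF hyp1])
    apply (rule notAA) using ok apply simp apply (rule W[OF gA], blast) by (rule ConjE1[OF hyp1])
qed

lemma inpA: assumes sub: "\<Gamma> \<subseteq> \<Delta>" and ok: "ok \<Delta>" and gA: "\<Delta> \<turnstile> Mem g A" shows "\<Delta> \<turnstile> InPair g g F"
proof -
  have s: "\<Gamma> \<subseteq> insert (Eq g x) \<Delta>" for x using sub by blast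
  have q4: "\<Gamma> \<subseteq> \<Delta>' \<Longrightarrow> \<Delta>' \<turnstile> Mem q Qf \<Longrightarrow> \<Delta>' \<turnstile> Mem q F" for \<Delta>' q by (rule u2I1[OF W[OF hF]])
  show ?thesis
    apply (rule quadC[OF W[OF hQ sub] gA])
    apply (rule inp_eq12[OF eq_sym[OF hyp1]]) apply (rule inpI[OF q4[OF s quadI1[OF W[OF hQ4 s]]] W[OF hpa s]])
    apply (rule inp_eq12[OF eq_sym[OF hyp1]]) apply (rule inpI[OF q4[OF s quadI2[OF W[OF hQ4 s]]] W[OF hpb s]])
    apply (rule inp_eq12[OF eq_sym[OF hyp1]]) apply (rule inpI[OF q4[OF s quadI3[OF W[OF hQ4 s]]] W[OF hpc s]])
    apply (rule inp_eq12[OF eq_sym[OF hyp1]]) by (rule inpI[OF q4[OF s quadI4[OF W[OF hQ4 s]]] W[OF hpd s]])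
qed

lemma fixA: assumes sub: "\<Gamma> \<subseteq> \<Delta>" and gA: "\<Delta> \<turnstile> Mem g A" shows "\<Delta> \<turnstile> Fx g g"
proof -
  have s: "\<Gamma> \<subseteq> insert (Eq g x) \<Delta>" for x using sub by blast
  show ?thesis
    apply (rule quadC[OF W[OF hQ sub] gA])
    apply (rule fx_eq[OF eq_sym[OF hyp1] W[OF hfa s]])
    apply (rule fx_eq[OF eq_sym[OF hyp1] W[OF hfb s]])
    apply (rule fx_eq[OF eq_sym[OF hyp1] W[OF hfc s]])
    by (rule fx_eq[OF eq_sym[OF hyp1] W[OF hfd s]])
qed

lemma chfix: assumes sub: "\<Gamma> \<subseteq> \<Delta>" and ok: "ok \<Delta>" and fx: "\<Delta> \<turnstile> Fx u w" and uA: "\<Delta> \<turnstile> Sub u A"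
  shows "\<Delta> \<turnstile> CH F u w"
proof (rule chI[OF ok])
  fix x g v let ?K = "insert (Mem g u) (insert (InPair g v F) (insert (Sub x v) (insert (Relpl v x) \<Delta>)))"
  have okK: "ok ?K" using ok by simp
  have sK: "\<Gamma> \<subseteq> ?K" using sub by blast
  have gA: "?K \<turnstile> Mem g A" by (rule subE[OF W[OF uA] hyp1]) blast
  have vg: "?K \<turnstile> Eq v g" by (rule Kl[OF sK okK gA]) (rule hyp, simp)
  show "?K \<turnstile> Mem x w"
    apply (rule fxI'[OF W[OF fx] hyp1]) apply blast
    apply (rule sub_eq2[OF vg]) apply (rule hyp, simp)
    apply (rule relpl_eq1[OF vg]) by (rule hyp, simp)
next
  fix x let ?H = "insert (Mem x w) \<Delta>"
  have okH: "ok ?H" using ok by simp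
  show "?H \<turnstile> CRr F u x"
  proof (rule fxE[OF wk1[OF fx] hyp1 okH])
    fix g let ?K = "insert (Mem g u) (insert (Sub x g) (insert (Relpl g x) ?H))"
    have okK: "ok ?K" using ok by simp
    have sK: "\<Gamma> \<subseteq> ?K" using sub by blast
    have gA: "?K \<turnstile> Mem g A" by (rule subE[OF W[OF uA] hyp1]) blast
    show "?K \<turnstile> CRr F u x"
      apply (rule chrI[OF hyp1 inpA[OF sK okK gA]]) by (rule hyp, simp)+
  qed
qed

lemma G_main: "\<Gamma> \<turnstile> PL A Y"
proof (rule plI[where F=F and D=D])
  show "\<Gamma> \<turnstile> Trans D"
  proof (rule transI[OF okG])
    fix y z let ?H = "insert (Mem z y) (insert (Mem y D) \<Gamma>)"
    have s: "\<Gamma> \<subseteq> insert x ?H" for x by blast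
    have yD: "?H \<turnstile> Mem y D" by (rule hyp) simp
    show "?H \<turnstile> Mem z D"
      apply (rule ssC[OF W[OF hD] yD]) apply blast
      apply (rule ssI1[OF W[OF hD s]]) apply (rule transE[OF W[OF htA s] hyp1]) apply (rule hyp, simp)
      apply (rule ssI1[OF W[OF hD s]]) apply (rule eq_mem2[OF hyp1]) by (rule hyp, simp)
  qed
next
  show "\<Gamma> \<turnstile> Mem A D" by (rule ssI2[OF hD eq_refl])
next
  show "\<Gamma> \<turnstile> P3 F D"
  proof (rule p3I[OF okG])
    fix x let ?H = "insert (Mem x D) \<Gamma>"
    have okH: "ok ?H" using okG by simp
    have s: "\<Gamma> \<subseteq> insert y ?H" for y by blast
    have ok2: "ok (insert y ?H)" for y using okG by simp
    have AF: "\<Gamma> \<turnstile> InPair A Y F" by (rule inpI[OF u2I2[OF hF singI'[OF hSg eq_refl]] hpA])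
    show "?H \<turnstile> Ex (InPair (Suc x) 0 (Suc F))"
      apply (rule ssC[OF W[OF hD] hyp1]) apply blast
      apply (rule p3w) apply (rule inpA[OF s ok2 hyp1])
      apply (rule p3w) by (rule inp_eq1[OF eq_sym[OF hyp1] W[OF AF s]])
  qed
next
  show "\<Gamma> \<turnstile> P4 F D"
  proof (rule p4I[OF okG])
    fix p let ?H = "insert (Mem p F) \<Gamma>"
    have s: "\<Gamma> \<subseteq> insert y ?H" for y by blast
    have s2: "\<Gamma> \<subseteq> insert y (insert z ?H)" for y z by blast
    show "?H \<turnstile> Ex (Conj (Mem 0 (Suc D)) (Ex (KPair (Suc (Suc p)) (Suc 0) 0)))"
      apply (rule u2C[OF W[OF hF] hyp1]) apply blast
      apply (rule quadC[OF W[OF hQ4 s] hyp1])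
      apply (rule p4w[OF ssI1[OF W[OF hD s2] quadI1[OF W[OF hQ s2]]] kp_eq[OF eq_sym[OF hyp1] W[OF hpa s2]]])
      apply (rule p4w[OF ssI1[OF W[OF hD s2] quadI2[OF W[OF hQ s2]]] kp_eq[OF eq_sym[OF hyp1] W[OF hpb s2]]])
      apply (rule p4w[OF ssI1[OF W[OF hD s2] quadI3[OF W[OF hQ s2]]] kp_eq[OF eq_sym[OF hyp1] W[OF hpc s2]]])
      apply (rule p4w[OF ssI1[OF W[OF hD s2] quadI4[OF W[OF hQ s2]]] kp_eq[OF eq_sym[OF hyp1] W[OF hpd s2]]])
      apply (rule p4w[OF ssI2[OF W[OF hD s] eq_refl]]) apply (rule kp_eq[OF eq_sym[OF singE[OF W[OF hSg s] hyp1]] W[OF hpA s]])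
      done
  qed
next
  show "\<Gamma> \<turnstile> P5 F"
  proof (rule p5I[OF okG])
    fix p q b v v'
    let ?H = "insert (KPair p b v) (insert (KPair q b v') (insert (Mem q F) (insert (Mem p F) \<Gamma>)))"
    have okH: "ok ?H" using okG by simp
    have s: "\<Gamma> \<subseteq> ?H" by blast
    have c1: "?H \<turnstile> Disj (Conj (Mem b A) (Eq v b)) (Conj (Eq b A) (Eq v Y))"
      by (rule fpair[OF s okH, where p=p]) (rule hyp, simp)+
    have c2: "?H \<turnstile> Disj (Conj (Mem b A) (Eq v' b)) (Conj (Eq b A) (Eq v' Y))"
      by (rule fpair[OF s okH, where p=q]) (rule hyp, simp)+
    let ?c1a = "Conj (Mem b A) (Eq v b)" let ?c1b = "Conj (Eq b A) (Eq v Y)"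
    let ?c2a = "Conj (Mem b A) (Eq v' b)" let ?c2b = "Conj (Eq b A) (Eq v' Y)"
    show "?H \<turnstile> Eq v v'"
      apply (rule disjE'[OF c1]; rule disjE'[OF wk1[OF c2]])
      apply (rule eq_trans[OF ConjE2[OF hyp[of ?c1a]] eq_sym[OF ConjE2[OF hyp1]]]) apply simp
      apply (rule notAA[OF _ ConjE1[OF hyp[of ?c1a]] ConjE1[OF hyp1]]) using okG apply simp apply simp
      apply (rule notAA[OF _ ConjE1[OF hyp1] ConjE1[OF hyp[of ?c1b]]]) using okG apply simp apply simp
      apply (rule eq_trans[OF ConjE2[OF hyp[of ?c1b]] eq_sym[OF ConjE2[OF hyp1]]]) by simp
  qed
next
  show "\<Gamma> \<turnstile> P6 F"
  proof (rule p6I[OF okG])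
    fix p b w let ?H = "insert (KPair p b w) (insert (Mem p F) \<Gamma>)"
    have okH: "ok ?H" using okG by simp
    have s: "\<Gamma> \<subseteq> ?H" by blast
    have c: "?H \<turnstile> Disj (Conj (Mem b A) (Eq w b)) (Conj (Eq b A) (Eq w Y))"
      by (rule fpair[OF s okH, where p=p]) (rule hyp, simp)+
    show "?H \<turnstile> CH F b w"
    proof (rule disjE'[OF c])
      let ?K = "insert (Conj (Mem b A) (Eq w b)) ?H"
      have okK: "ok ?K" using okG by simp
      have sK: "\<Gamma> \<subseteq> ?K" by blast
      have bA: "?K \<turnstile> Mem b A" by (rule ConjE1[OF hyp1])
      have bsA: "?K \<turnstile> Sub b A" by (rule subI[OF okK]) (rule transE[OF W[OF htA] wk1[OF bA] hyp1], blast)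
      have "?K \<turnstile> CH F b b" by (rule chfix[OF sK okK fixA[OF sK bA] bsA])
      then show "?K \<turnstile> CH F b w" by (rule ch_eq3[OF eq_sym[OF ConjE2[OF hyp1]]])
    next
      let ?K = "insert (Conj (Eq b A) (Eq w Y)) ?H"
      have okK: "ok ?K" using okG by simp
      have sK: "\<Gamma> \<subseteq> ?K" by blast
      have "?K \<turnstile> CH F A Y" by (rule chfix[OF sK okK W[OF hfY sK] sub_refl[OF okK]])
      then have "?K \<turnstile> CH F b Y" by (rule ch_eq2[OF eq_sym[OF ConjE1[OF hyp1]]])
      then show "?K \<turnstile> CH F b w" by (rule ch_eq3[OF eq_sym[OF ConjE2[OF hyp1]]])
    qed
  qed
next
  show "\<Gamma> \<turnstile> InPair A Y F" by (rule inpI[OF u2I2[OF hF singI'[OF hSg eq_refl]] hpA])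
qed

end


lemma G_full: assumes ok: "ok \<Gamma>" and Q: "\<Gamma> \<turnstile> Quad A a b c d" and tA: "\<Gamma> \<turnstile> Trans A"
  and fa: "\<Gamma> \<turnstile> Fx a a" and fb: "\<Gamma> \<turnstile> Fx b b" and fc: "\<Gamma> \<turnstile> Fx c c" and fd: "\<Gamma> \<turnstile> Fx d d"
  and fY: "\<Gamma> \<turnstile> Fx A Y"
  shows "\<Gamma> \<turnstile> PL A Y"
  apply (rule kpExE[OF ok, of a a])
  apply (rule kpExE[of _ b b], simp add: ok)
  apply (rule kpExE[of _ c c], simp add: ok)
  apply (rule kpExE[of _ d d], simp add: ok)
  apply (rule kpExE[of _ A Y], simp add: ok)
  subgoal for pa pb pc pd pA
    apply (rule quadE[of _ pa pb pc pd], simp add: ok)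
    subgoal for Qf
      apply (rule singExE[of _ pA], simp add: ok)
      subgoal for Sg
        apply (rule union2E[of _ Qf Sg], simp add: ok)
        subgoal for F
          apply (rule succE[of _ A], simp add: ok)
          subgoal for D
            apply (rule G_main[where a=a and b=b and c=c and d=d and pa=pa and pb=pb and pc=pc and pd=pd
                and pA=pA and Qf=Qf and Sg=Sg and F=F and D=D])
            apply (simp add: ok)
            apply (rule W[OF Q], blast) apply (rule W[OF tA], blast)
            apply (rule W[OF fa], blast) apply (rule W[OF fb], blast) apply (rule W[OF fc], blast)
            apply (rule W[OF fd], blast) apply (rule W[OF fY], blast)
            by (rule hyp, simp)+
          done
        done
      done
    done
  done


lemma inj_get: assumes I: "\<Gamma> \<turnstile> dB (nInj 0)" and "\<Gamma> \<turnstile> Ord a" "\<Gamma> \<turnstile> Ord b" "\<Gamma> \<turnstile> PL a y" "\<Gamma> \<turnstile> PL b y"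
  shows "\<Gamma> \<turnstile> Eq a b"
proof -
  have "\<Gamma> \<turnstile> All (All (All (Imp (Conj (Ord (Suc (Suc 0))) (Conj (Ord (Suc 0)) (Conj (PL (Suc (Suc 0)) 0) (PL (Suc 0) 0)))) (Eq (Suc (Suc 0)) (Suc 0)))))"
    using I by (simp add: Inj_eq)
  then have "\<Gamma> \<turnstile> inst (All (All (Imp (Conj (Ord (Suc (Suc 0))) (Conj (Ord (Suc 0)) (Conj (PL (Suc (Suc 0)) 0) (PL (Suc 0) 0)))) (Eq (Suc (Suc 0)) (Suc 0))))) a"
    by (rule AllE)
  then have "\<Gamma> \<turnstile> All (All (Imp (Conj (Ord (Suc (Suc a))) (Conj (Ord (Suc 0)) (Conj (PL (Suc (Suc a)) 0) (PL (Suc 0) 0)))) (Eq (Suc (Suc a)) (Suc 0))))"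
    by (simp add: inst_def)
  then have "\<Gamma> \<turnstile> inst (All (Imp (Conj (Ord (Suc (Suc a))) (Conj (Ord (Suc 0)) (Conj (PL (Suc (Suc a)) 0) (PL (Suc 0) 0)))) (Eq (Suc (Suc a)) (Suc 0)))) b"
    by (rule AllE)
  then have "\<Gamma> \<turnstile> All (Imp (Conj (Ord (Suc a)) (Conj (Ord (Suc b)) (Conj (PL (Suc a) 0) (PL (Suc b) 0)))) (Eq (Suc a) (Suc b)))"
    by (simp add: inst_def)
  then have "\<Gamma> \<turnstile> inst (Imp (Conj (Ord (Suc a)) (Conj (Ord (Suc b)) (Conj (PL (Suc a) 0) (PL (Suc b) 0)))) (Eq (Suc a) (Suc b))) y"
    by (rule AllE)
  then have "\<Gamma> \<turnstile> Imp (Conj (Ord a) (Conj (Ord b) (Conj (PL a y) (PL b y)))) (Eq a b)"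
    by (simp add: inst_def)
  then show ?thesis by (rule ImpE) (intro ConjI assms(2-5))
qed

lemma plub_get: assumes ok: "ok \<Gamma>" and P: "\<Gamma> \<turnstile> dB (nPlUb 0)" and w: "\<Gamma> \<turnstile> PlOrd w"
  and c: "\<And>\<beta>. insert (PlOrd \<beta>) (insert (Mem w \<beta>) \<Gamma>) \<turnstile> C" shows "\<Gamma> \<turnstile> C"
proof -
  have "\<Gamma> \<turnstile> All (Imp (PlOrd 0) (Ex (Conj (PlOrd 0) (Mem (Suc 0) 0))))" using P by (simp add: PlUb_eq)
  then have "\<Gamma> \<turnstile> inst (Imp (PlOrd 0) (Ex (Conj (PlOrd 0) (Mem (Suc 0) 0)))) w" by (rule AllE)
  then have "\<Gamma> \<turnstile> Imp (PlOrd w) (Ex (Conj (PlOrd 0) (Mem (Suc w) 0)))" by (simp add: inst_def)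
  then have "\<Gamma> \<turnstile> Ex (Conj (PlOrd 0) (Mem (Suc w) 0))" using w by (rule ImpE)
  then show ?thesis
    apply (rule exE'[OF _ ok]) apply (simp add: inst_def) apply (rule conjH) by (rule c)
qed

lemma sub_empty: assumes ok: "ok \<Gamma>" and E: "\<Gamma> \<turnstile> Emp e" and S: "\<Gamma> \<turnstile> Sub x e" shows "\<Gamma> \<turnstile> Eq x e"
  apply (rule extI[OF ok]) apply (rule empE[OF wk1[OF E]]) apply (rule subE[OF wk1[OF S] hyp1])
  by (rule empE[OF wk1[OF E] hyp1])

lemma sub_trans: assumes ok: "ok \<Gamma>" and "\<Gamma> \<turnstile> Sub x y" "\<Gamma> \<turnstile> Sub y z" shows "\<Gamma> \<turnstile> Sub x z"
  by (rule subI[OF ok]) (rule subE[OF wk1[OF assms(3)] subE[OF wk1[OF assms(2)] hyp1]])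

lemma sub_eq1: "\<Gamma> \<turnstile> Eq x y \<Longrightarrow> \<Gamma> \<turnstile> Sub x g \<Longrightarrow> \<Gamma> \<turnstile> Sub y g"
  using eqsubst[of \<Gamma> x y "Sub 0 (Suc g)"] by (simp add: inst_def)

context
  fixes \<Gamma> :: "fm set" and e on :: nat
  assumes ok: "ok \<Gamma>" and E: "\<Gamma> \<turnstile> Emp e" and O: "\<Gamma> \<turnstile> Sing on e"
begin

lemma in_o: "\<Gamma> \<subseteq> \<Delta> \<Longrightarrow> \<Delta> \<turnstile> Mem z on \<Longrightarrow> \<Delta> \<turnstile> Eq z e"
  by (rule singE[OF W[OF O]])

lemma sub_o_trans: assumes s: "\<Gamma> \<subseteq> \<Delta>" and okD: "ok \<Delta>" and y: "\<Delta> \<turnstile> Sub y on" shows "\<Delta> \<turnstile> Trans y"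
proof (rule transI[OF okD])
  fix w z let ?H = "insert (Mem z w) (insert (Mem w y) \<Delta>)"
  have "?H \<turnstile> Eq w e" by (rule in_o) (use s in blast, rule subE[OF W[OF y] hyp], blast, simp)
  then have ze: "?H \<turnstile> Mem z e" by (rule eq_mem2) (rule hyp1)
  have EH: "?H \<turnstile> Emp e" by (rule W[OF E]) (use s in blast)
  show "?H \<turnstile> Mem z y" by (rule empE[OF EH ze])
qed

lemma sub_e: "\<Gamma> \<subseteq> \<Delta> \<Longrightarrow> ok \<Delta> \<Longrightarrow> \<Delta> \<turnstile> Sub e on"
  apply (rule subI, assumption) apply (rule empE[OF W[OF E] hyp1]) by blast
lemma sub_oo: "ok \<Delta> \<Longrightarrow> \<Delta> \<turnstile> Sub on on" by (rule sub_refl)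

lemma relpl_small: assumes s: "\<Gamma> \<subseteq> \<Delta>" and okD: "ok \<Delta>" and x: "\<Delta> \<turnstile> Sub x on" shows "\<Delta> \<turnstile> Relpl W x"
proof (rule relplI[OF okD])
  fix d ep let ?H = "insert (Sub ep d) (insert (Mem ep W) (insert (Mem d x) \<Delta>))"
  have okH: "ok ?H" using okD by simp
  have de: "?H \<turnstile> Eq d e" by (rule in_o) (use s in blast, rule subE[OF W[OF x] hyp], blast, simp)
  have "?H \<turnstile> Sub ep e" by (rule sub_eq2[OF de hyp1])
  moreover have EH: "?H \<turnstile> Emp e" by (rule W[OF E]) (use s in blast)
  ultimately have ee: "?H \<turnstile> Eq ep e" using sub_empty[OF okH] by blast
  have "?H \<turnstile> Eq d ep" by (rule eq_trans[OF de eq_sym[OF ee]])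
  then show "?H \<turnstile> Mem ep x" by (rule eq_mem1) (rule hyp, simp)
qed

lemma fx_fwd: "ok \<Delta> \<Longrightarrow> \<Delta> \<turnstile> Mem x s \<Longrightarrow> \<Delta> \<turnstile> FR s x"
  apply (rule frI, assumption) apply (rule sub_refl, assumption) by (rule relpl_refl)

lemma small_eq: assumes s: "\<Gamma> \<subseteq> \<Delta>" and okD: "ok \<Delta>" and g: "\<Delta> \<turnstile> Eq g e" and x: "\<Delta> \<turnstile> Sub x g" shows "\<Delta> \<turnstile> Eq x e"
  by (rule sub_empty[OF okD W[OF E s] sub_eq2[OF g x]])

lemma fx_e: "\<Gamma> \<turnstile> Fx e e"
  apply (rule fxI[OF ok]) apply (rule fx_fwd) using ok apply simp apply (rule hyp1)
  apply (rule empE[OF W[OF E]]) apply blast by (rule hyp1)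

lemma fx_o: "\<Gamma> \<turnstile> Fx on on"
proof (rule fxI[OF ok])
  fix x show "insert (Mem x on) \<Gamma> \<turnstile> FR on x" by (rule fx_fwd) (use ok in simp, rule hyp1)
next
  fix x g let ?H = "insert (Mem g on) (insert (Sub x g) (insert (Relpl g x) \<Gamma>))"
  have okH: "ok ?H" using ok by simp
  have s: "\<Gamma> \<subseteq> ?H" by blast
  have "?H \<turnstile> Eq x e" by (rule small_eq[OF s okH in_o[OF s hyp1]]) (rule hyp, simp)
  then show "?H \<turnstile> Mem x on" by (rule singI'[OF W[OF O s]])
qed

lemma o_PlOrd: "\<Gamma> \<turnstile> PlOrd on"
proof (rule plordI[OF ok])
  show "\<Gamma> \<turnstile> Ord on"
  proof (rule ordI[OF ok sub_o_trans[OF _ ok sub_oo[OF ok]]])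
    show "\<Gamma> \<subseteq> \<Gamma>" by blast
    fix y let ?H = "insert (Mem y on) \<Gamma>"
    have okH: "ok ?H" using ok by simp
    have yo: "?H \<turnstile> Sub y on" by (rule sub_eq1[OF eq_sym[OF in_o[OF _ hyp1]] sub_e]) (use okH in blast)+
    show "?H \<turnstile> Trans y" by (rule sub_o_trans[OF _ okH yo]) blast
  qed
next
  fix b g let ?H = "insert (Relpl on g) (insert (Sub g b) (insert (Mem b on) \<Gamma>))"
  have okH: "ok ?H" using ok by simp
  have s: "\<Gamma> \<subseteq> ?H" by blast
  have "?H \<turnstile> Eq g e" by (rule small_eq[OF s okH in_o[OF s], where g=b]) (rule hyp, simp)+
  then show "?H \<turnstile> Mem g on" by (rule singI'[OF W[OF O s]])
next
  fix b g d let ?H = "insert (Mem b d) (insert (Mem d on) (insert (Relpl on g) (insert (Sub g b) (insert (Mem b on) \<Gamma>))))"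
  have s: "\<Gamma> \<subseteq> ?H" by blast
  have "?H \<turnstile> Eq d e" by (rule in_o[OF s]) (rule hyp, simp)
  then have "?H \<turnstile> Mem b e" by (rule eq_mem2) (rule hyp1)
  then show "?H \<turnstile> Mem g d" by (rule empE[OF W[OF E s]])
qed

end


context
  fixes \<Gamma> :: "fm set" and e on r u v Aa Ab \<beta> Y :: nat
  assumes ok: "ok \<Gamma>" and E: "\<Gamma> \<turnstile> Emp e" and O: "\<Gamma> \<turnstile> Sing on e"
  and R: "\<Gamma> \<turnstile> All (Iff (Mem 0 (Suc r)) (Conj (Mem 0 (Suc on)) (Mem (Suc u) (Suc v))))"
  and Q1: "\<Gamma> \<turnstile> Quad Aa e on r r" and Q2: "\<Gamma> \<turnstile> Quad Ab e on on on"
  and PB: "\<Gamma> \<turnstile> PlOrd \<beta>" and OB: "\<Gamma> \<turnstile> Mem on \<beta>"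
  and YS: "\<Gamma> \<turnstile> All (Iff (Mem 0 (Suc Y)) (Conj (Mem 0 (Suc \<beta>)) (Sub 0 (Suc on))))"
begin

lemma rE: "\<Gamma> \<subseteq> \<Delta> \<Longrightarrow> \<Delta> \<turnstile> Mem z r \<Longrightarrow> \<Delta> \<turnstile> Conj (Mem z on) (Mem u v)"
  using setE[OF W[OF R]] by (simp add: inst_def)
lemma rI: "\<Gamma> \<subseteq> \<Delta> \<Longrightarrow> \<Delta> \<turnstile> Conj (Mem z on) (Mem u v) \<Longrightarrow> \<Delta> \<turnstile> Mem z r"
  using setI[OF W[OF R], of \<Delta> z] by (simp add: inst_def)

lemma sub_r: "\<Gamma> \<subseteq> \<Delta> \<Longrightarrow> ok \<Delta> \<Longrightarrow> \<Delta> \<turnstile> Sub r on"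
  apply (rule subI, assumption) apply (rule ConjE1) apply (rule rE) by (blast, rule hyp1)

lemma subQ: assumes s: "\<Gamma> \<subseteq> \<Delta>" and okD: "ok \<Delta>" and Q: "\<Delta> \<turnstile> Quad A e on c d"
  and c: "\<Delta> \<turnstile> Sub c on" and d: "\<Delta> \<turnstile> Sub d on" and y: "\<Delta> \<turnstile> Mem y A" shows "\<Delta> \<turnstile> Sub y on"
  apply (rule quadC[OF Q y])
  apply (rule sub_eq1[OF eq_sym[OF hyp1]]) apply (rule sub_e[OF ok E O]) using s apply blast using okD apply simp
  apply (rule sub_eq1[OF eq_sym[OF hyp1]]) apply (rule sub_refl) using okD apply simp
  apply (rule sub_eq1[OF eq_sym[OF hyp1] wk1[OF c]])
  by (rule sub_eq1[OF eq_sym[OF hyp1] wk1[OF d]])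

lemma sub_Aa: "\<Gamma> \<subseteq> \<Delta> \<Longrightarrow> ok \<Delta> \<Longrightarrow> \<Delta> \<turnstile> Mem y Aa \<Longrightarrow> \<Delta> \<turnstile> Sub y on"
  by (rule subQ[OF _ _ W[OF Q1] sub_r sub_r]) auto
lemma sub_Ab: "\<Gamma> \<subseteq> \<Delta> \<Longrightarrow> ok \<Delta> \<Longrightarrow> \<Delta> \<turnstile> Mem y Ab \<Longrightarrow> \<Delta> \<turnstile> Sub y on"
  by (rule subQ[OF _ _ W[OF Q2] sub_refl sub_refl]) auto

lemma ordA: assumes subA: "\<And>\<Delta> y. \<Gamma> \<subseteq> \<Delta> \<Longrightarrow> ok \<Delta> \<Longrightarrow> \<Delta> \<turnstile> Mem y A \<Longrightarrow> \<Delta> \<turnstile> Sub y on"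
  and eA: "\<Gamma> \<turnstile> Mem e A" shows "\<Gamma> \<turnstile> Ord A"
proof (rule ordI[OF ok])
  show "\<Gamma> \<turnstile> Trans A"
  proof (rule transI[OF ok])
    fix y z let ?H = "insert (Mem z y) (insert (Mem y A) \<Gamma>)"
    have okH: "ok ?H" using ok by simp
    have s: "\<Gamma> \<subseteq> ?H" by blast
    have "?H \<turnstile> Sub y on" by (rule subA[OF s okH]) (rule hyp, simp)
    then have "?H \<turnstile> Mem z on" by (rule subE) (rule hyp1)
    then have "?H \<turnstile> Eq z e" by (rule in_o[OF ok E O s])
    then show "?H \<turnstile> Mem z A" by (rule eqmem) (rule W[OF eA s])
  qed
next
  fix y let ?H = "insert (Mem y A) \<Gamma>"
  have okH: "ok ?H" using ok by simp
  have s: "\<Gamma> \<subseteq> ?H" by blast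
  have yo: "?H \<turnstile> Sub y on" by (rule subA[OF s okH hyp1])
  show "?H \<turnstile> Trans y" by (rule sub_o_trans[OF ok E O s okH yo])
qed

lemma fx_r: "\<Gamma> \<turnstile> Fx r r"
proof (rule fxI[OF ok])
  fix x show "insert (Mem x r) \<Gamma> \<turnstile> FR r x" by (rule fx_fwd[OF ok E O]) (use ok in simp, rule hyp1)
next
  fix x g let ?H = "insert (Mem g r) (insert (Sub x g) (insert (Relpl g x) \<Gamma>))"
  have okH: "ok ?H" using ok by simp
  have s: "\<Gamma> \<subseteq> ?H" by blast
  have c: "?H \<turnstile> Conj (Mem g on) (Mem u v)" by (rule rE[OF s hyp1])
  have ge: "?H \<turnstile> Eq g e" by (rule in_o[OF ok E O s ConjE1[OF c]])
  have xe: "?H \<turnstile> Eq x e" by (rule small_eq[OF ok E O s okH ge]) (rule hyp, simp)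
  have "?H \<turnstile> Mem x on" by (rule singI'[OF W[OF O s] xe])
  then show "?H \<turnstile> Mem x r" by (rule rI[OF s ConjI[OF _ ConjE2[OF c]]])
qed

lemma fxY: assumes subA: "\<And>\<Delta> y. \<Gamma> \<subseteq> \<Delta> \<Longrightarrow> ok \<Delta> \<Longrightarrow> \<Delta> \<turnstile> Mem y A \<Longrightarrow> \<Delta> \<turnstile> Sub y on"
  and oA: "\<Gamma> \<turnstile> Mem on A" shows "\<Gamma> \<turnstile> Fx A Y"
proof (rule fxI[OF ok])
  fix x let ?H = "insert (Mem x Y) \<Gamma>"
  have okH: "ok ?H" using ok by simp
  have s: "\<Gamma> \<subseteq> ?H" by blast
  have "?H \<turnstile> inst (Conj (Mem 0 (Suc \<beta>)) (Sub 0 (Suc on))) x" by (rule setE[OF W[OF YS s] hyp1])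
  then have c: "?H \<turnstile> Conj (Mem x \<beta>) (Sub x on)" by (simp add: inst_def)
  show "?H \<turnstile> FR A x"
    by (rule frI[OF W[OF oA s] ConjE2[OF c] relpl_small[OF ok E O s okH ConjE2[OF c]]])
next
  fix x g let ?H = "insert (Mem g A) (insert (Sub x g) (insert (Relpl g x) \<Gamma>))"
  have okH: "ok ?H" using ok by simp
  have s: "\<Gamma> \<subseteq> ?H" by blast
  have go: "?H \<turnstile> Sub g on" by (rule subA[OF s okH hyp1])
  have xo: "?H \<turnstile> Sub x on" by (rule sub_trans[OF okH _ go]) (rule hyp, simp)
  have xb: "?H \<turnstile> Mem x \<beta>" by (rule plordE2[OF W[OF PB s] W[OF OB s] xo relpl_small[OF ok E O s okH xo]])
  have "?H \<turnstile> inst (Conj (Mem 0 (Suc \<beta>)) (Sub 0 (Suc on))) x" by (simp add: inst_def ConjI[OF xb xo])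
  then show "?H \<turnstile> Mem x Y" by (rule setI[OF W[OF YS s]])
qed

lemma ord1: "\<Gamma> \<turnstile> Ord Aa" by (rule ordA[OF sub_Aa quadI1[OF Q1]]) auto
lemma ord2: "\<Gamma> \<turnstile> Ord Ab" by (rule ordA[OF sub_Ab quadI1[OF Q2]]) auto

lemma pl1: "\<Gamma> \<turnstile> PL Aa Y"
  by (rule G_full[OF ok Q1 ordE1[OF ord1] fx_e[OF ok E O] fx_o[OF ok E O] fx_r fx_r fxY[OF sub_Aa quadI2[OF Q1]]]) auto
lemma pl2: "\<Gamma> \<turnstile> PL Ab Y"
  by (rule G_full[OF ok Q2 ordE1[OF ord2] fx_e[OF ok E O] fx_o[OF ok E O] fx_o[OF ok E O] fx_o[OF ok E O] fxY[OF sub_Ab quadI2[OF Q2]]]) auto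

lemma rem_case: assumes eq: "\<Gamma> \<turnstile> Eq Aa Ab" shows "\<Gamma> \<turnstile> Disj (Mem u v) (Neg (Mem u v))"
proof -
  have rAb: "\<Gamma> \<turnstile> Mem r Ab" by (rule eq_mem2[OF eq quadI3[OF Q1]])
  have eo: "\<Gamma> \<turnstile> Mem e on" by (rule singI'[OF O eq_refl])
  have caseo: "insert (Eq r on) \<Gamma> \<turnstile> Disj (Mem u v) (Neg (Mem u v))"
  proof -
    let ?H = "insert (Eq r on) \<Gamma>"
    have s: "\<Gamma> \<subseteq> ?H" by blast
    have "?H \<turnstile> Mem e r" by (rule eq_mem2[OF eq_sym[OF hyp1] wk1[OF eo]])
    then have "?H \<turnstile> Conj (Mem e on) (Mem u v)" by (rule rE[OF s])
    then show ?thesis by (rule DisjI1[OF ConjE2])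
  qed
  show ?thesis
  proof (rule quadC[OF Q2 rAb])
    let ?H = "insert (Mem u v) (insert (Eq r e) \<Gamma>)"
    have s: "\<Gamma> \<subseteq> ?H" by blast
    have "?H \<turnstile> Mem e r" by (rule rI[OF s ConjI[OF W[OF eo s] hyp1]])
    then have "?H \<turnstile> Mem e e" by (rule eq_mem2[OF hyp[of "Eq r e"], rotated]) simp
    then have "?H \<turnstile> Fls" by (rule empE[OF W[OF E s]])
    then show "insert (Eq r e) \<Gamma> \<turnstile> Disj (Mem u v) (Neg (Mem u v))" by (rule DisjI2[OF negI])
  qed (rule caseo)+
qed


lemma rem_final: "\<Gamma> \<turnstile> dB (nInj 0) \<Longrightarrow> \<Gamma> \<turnstile> Disj (Mem u v) (Neg (Mem u v))"
  by (rule rem_case[OF inj_get[OF _ ord1 ord2 pl1 pl2]])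

end

lemma rem_from: assumes ok: "ok \<Gamma>" and Pu: "\<Gamma> \<turnstile> dB (nPlUb 0)" and In: "\<Gamma> \<turnstile> dB (nInj 0)"
  shows "\<Gamma> \<turnstile> Disj (Mem u v) (Neg (Mem u v))"
  apply (rule emptyE[OF ok]) subgoal for e
  apply (rule singExE[of _ e], simp add: ok) subgoal for on
  apply (rule sepE'[where a=on and \<psi>="Mem (Suc u) (Suc v)"], simp add: ok, intro delta0.intros) subgoal for r
  apply (rule quadE[of _ e on r r], simp add: ok) subgoal for Aa
  apply (rule quadE[of _ e on on on], simp add: ok) subgoal for Ab
  apply (rule plub_get[where w=on]) apply (simp add: ok) apply (rule W[OF Pu], blast)
  apply (rule o_PlOrd[where e=e]) apply (simp add: ok) apply (rule hyp, simp) apply (rule hyp, simp)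
  subgoal for \<beta>
  apply (rule sepE'[where a=\<beta> and \<psi>="Sub 0 (Suc on)"], simp add: ok) apply (simp only: Sub_eq, intro delta0.intros)
  subgoal for Y
  apply (rule rem_final[where e=e and on=on and r=r and Aa=Aa and Ab=Ab and \<beta>=\<beta> and Y=Y])
  apply (simp add: ok)
  apply (rule hyp, simp) apply (rule hyp, simp) apply (rule hyp, simp) apply (rule hyp, simp)
  apply (rule hyp, simp) apply (rule hyp, simp) apply (rule hyp, simp) apply (rule hyp, simp)
  by (rule W[OF In], blast)
  done done done done done done done


lemma ok_IKP: "ok IKP"
proof -
  have "FV IKP \<subseteq> fvs (dB nExt) \<union> fvs (dB nPairing) \<union> fvs (dB nUnion) \<union> fvs (dB nEmpty) \<union> fvs (dB nStrongInf)"
    unfolding FV_def IKP_def closed_def by blast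
  then have "finite (FV IKP)" by (rule finite_subset) simp
  then show ?thesis unfolding ok_def by simp
qed

theorem proposition3p3:
  shows "IKP \<turnstile> Iff (dB (NConj (nPlUb 0) (nInj 0))) (dB nREM)"
proof -
  have c: "dB (NConj (nPlUb 0) (nInj 0)) = Conj (dB (nPlUb 0)) (dB (nInj 0))" by (simp add: dB_def)
  let ?G1 = "insert (Conj (dB (nPlUb 0)) (dB (nInj 0))) IKP"
  have ok1: "ok ?G1" using ok_IKP by simp
  have d1: "?G1 \<turnstile> dB nREM"
    unfolding REM_def[symmetric] REM_eq
  proof (rule allI'[OF ok1])
    fix u show "?G1 \<turnstile> inst (All (Disj (Mem (Suc 0) 0) (Imp (Mem (Suc 0) 0) Fls))) u"
      apply (simp add: inst_def)
      apply (rule allI'[OF ok1])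
      subgoal for v
        using rem_from[OF ok1 ConjE1[OF hyp1] ConjE2[OF hyp1], of u v] by (simp add: inst_def Neg_def)
      done
  qed
  let ?G2 = "insert (dB nREM) IKP"
  have ok2: "ok ?G2" using ok_IKP by simp
  have rem: "?G2 \<turnstile> REM" unfolding REM_def by (rule hyp1)
  have d2: "?G2 \<turnstile> Conj (dB (nPlUb 0)) (dB (nInj 0))" by (rule ConjI[OF plub[OF ok2 rem] inj[OF ok2 rem]])
  show ?thesis unfolding c Iff_def by (rule ConjI[OF ImpI[OF d1] ImpI[OF d2]])
qed


end
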